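(* Consider an MDP with transition density $q$, target policy $\pi$, discount factor $0\le\gamma<1$, and batch data from $N$ i.i.d. trajectories generated by a stationary behavior policy $\pi^b$. Assume the Markov property with transition density $q$, that there are positive constants $p_{\min},p_{1,\max},p_{2,\max}$ with $p_{\min}\le\bar d^{\pi^b}_T\le p_{1,\max}$, $\pi$ absolutely continuous with respect to $\pi^b$, and $q(s'\mid s,a)\pi(a'\mid s')\le p_{2,\max}$, and that $\{(S_t,A_t)\}_{t\ge0}$ under $\pi^b$ is strictly stationary with stationary density $d^{\pi^b}$ and exponentially $\beta$-mixing. Let $p_{\max}=\max(p_{1,\max},p_{2,\max})$. Then for every $J\ge1$, $$e_J\gtrsim\frac{p_{\min}^2}{p_{\max}}(1-\gamma)^2\omega_J,$$ where $\omega_J=\lambda_{\min}\big(\mathbb E[\psi^J(S,A)\psi^J(S,A)^\top]\big)$.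
   Context: $\bar d^{\pi^b}_T$ is the average over $0\le t<T$ of the marginal densities of $(S_t,A_t)$ under $\pi^b$. $\psi^J=(\psi_{J1},\dots,\psi_{JJ})^\top$ is a vector of sieve basis functions in $L^2$ on $\mathcal S\times\mathcal A$; $\psi^J_\pi(s)=\int\pi(a\mid s)\psi^J(s,a)da$; $\kappa^J_\pi(s,a,s')=\psi^J(s,a)-\gamma\psi^J_\pi(s')$. $\mathbb E$ is with $(S,A)\sim d^{\pi^b}$ and $S'\mid(S,A)\sim q$. $e_J=\lambda_{\min}\big(\mathbb E[\kappa^J_\pi(S,A,S')\kappa^J_\pi(S,A,S')^\top]\big)$. Exponential $\beta$-mixing means $\beta_k\le\beta_0e^{-\beta_1k}$ with $\beta_0\ge0$, $\beta_1>0$. $a\gtrsim b$ means $a\ge cb$ for a positive constant $c$. *)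

theory Defs
  imports "HOL-Analysis.Analysis" "Jordan_Normal_Form.Char_Poly"
begin

definition SAM :: "'s measure \<Rightarrow> 'a measure \<Rightarrow> ('s \<times> 'a) measure" where
  "SAM Sm Am = Sm \<Otimes>\<^sub>M Am"

text \<open>Marginal density of (S_t, A_t) under the behaviour policy pb, initial state
  density nu0 and transition density q (q s a s' = q(s' | s, a)), pb s a = pb(a | s).\<close>
fun marg :: "'s measure \<Rightarrow> 'a measure \<Rightarrow> ('s \<Rightarrow> real) \<Rightarrow> ('s \<Rightarrow> 'a \<Rightarrow> 's \<Rightarrow> real)
    \<Rightarrow> ('s \<Rightarrow> 'a \<Rightarrow> real) \<Rightarrow> nat \<Rightarrow> 's \<times> 'a \<Rightarrow> real" where
  "marg Sm Am nu0 q pb 0 = (\<lambda>(s, a). nu0 s * pb s a)"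
| "marg Sm Am nu0 q pb (Suc t) =
     (\<lambda>(s', a'). (\<integral>x. marg Sm Am nu0 q pb t x * q (fst x) (snd x) s' \<partial>SAM Sm Am) * pb s' a')"

definition dbar :: "'s measure \<Rightarrow> 'a measure \<Rightarrow> ('s \<Rightarrow> real) \<Rightarrow> ('s \<Rightarrow> 'a \<Rightarrow> 's \<Rightarrow> real)
    \<Rightarrow> ('s \<Rightarrow> 'a \<Rightarrow> real) \<Rightarrow> nat \<Rightarrow> 's \<times> 'a \<Rightarrow> real" where
  "dbar Sm Am nu0 q pb T = (\<lambda>x. (\<Sum>t<T. marg Sm Am nu0 q pb t x) / real T)"

text \<open>(k+1)-step transition density of the state-action chain under pb.\<close>
fun kdens :: "'s measure \<Rightarrow> 'a measure \<Rightarrow> ('s \<Rightarrow> 'a \<Rightarrow> 's \<Rightarrow> real)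
    \<Rightarrow> ('s \<Rightarrow> 'a \<Rightarrow> real) \<Rightarrow> nat \<Rightarrow> 's \<times> 'a \<Rightarrow> 's \<times> 'a \<Rightarrow> real" where
  "kdens Sm Am q pb 0 = (\<lambda>x y. q (fst x) (snd x) (fst y) * pb (fst y) (snd y))"
| "kdens Sm Am q pb (Suc k) =
     (\<lambda>x y. \<integral>z. kdens Sm Am q pb k x z * q (fst z) (snd z) (fst y) * pb (fst y) (snd y) \<partial>SAM Sm Am)"

text \<open>beta-mixing coefficient of the strictly stationary Markov chain (S_t,A_t) with
  stationary density d:  beta_k = E_d [ || P^k((S,A), .) - d ||_TV ]  (k >= 1).\<close>
definition beta_coeff :: "'s measure \<Rightarrow> 'a measure \<Rightarrow> ('s \<Rightarrow> 'a \<Rightarrow> 's \<Rightarrow> real)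
    \<Rightarrow> ('s \<Rightarrow> 'a \<Rightarrow> real) \<Rightarrow> ('s \<times> 'a \<Rightarrow> real) \<Rightarrow> nat \<Rightarrow> real" where
  "beta_coeff Sm Am q pb d k =
     (\<integral>x. d x * ((1/2) * (\<integral>y. \<bar>kdens Sm Am q pb (k - 1) x y - d y\<bar> \<partial>SAM Sm Am)) \<partial>SAM Sm Am)"

definition exp_beta_mixing :: "'s measure \<Rightarrow> 'a measure \<Rightarrow> ('s \<Rightarrow> 'a \<Rightarrow> 's \<Rightarrow> real)
    \<Rightarrow> ('s \<Rightarrow> 'a \<Rightarrow> real) \<Rightarrow> ('s \<times> 'a \<Rightarrow> real) \<Rightarrow> bool" where
  "exp_beta_mixing Sm Am q pb d \<longleftrightarrow>
     (\<exists>b0 b1. b0 \<ge> 0 \<and> b1 > 0 \<and>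
        (\<forall>k\<ge>1. beta_coeff Sm Am q pb d k \<le> b0 * exp (- b1 * real k)))"

definition Exp3 :: "'s measure \<Rightarrow> 'a measure \<Rightarrow> ('s \<Rightarrow> 'a \<Rightarrow> 's \<Rightarrow> real)
    \<Rightarrow> ('s \<times> 'a \<Rightarrow> real) \<Rightarrow> ('s \<times> 'a \<Rightarrow> 's \<Rightarrow> real) \<Rightarrow> real" where
  "Exp3 Sm Am q d g =
     (\<integral>x. d x * (\<integral>s'. q (fst x) (snd x) s' * g x s' \<partial>Sm) \<partial>SAM Sm Am)"

definition psi_pi :: "'a measure \<Rightarrow> ('s \<Rightarrow> 'a \<Rightarrow> real) \<Rightarrow> (nat \<Rightarrow> 's \<times> 'a \<Rightarrow> real)
    \<Rightarrow> nat \<Rightarrow> 's \<Rightarrow> real" where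
  "psi_pi Am pol psi j s = (\<integral>a. pol s a * psi j (s, a) \<partial>Am)"

definition kappa :: "'a measure \<Rightarrow> ('s \<Rightarrow> 'a \<Rightarrow> real) \<Rightarrow> real \<Rightarrow> (nat \<Rightarrow> 's \<times> 'a \<Rightarrow> real)
    \<Rightarrow> nat \<Rightarrow> 's \<times> 'a \<Rightarrow> 's \<Rightarrow> real" where
  "kappa Am pol \<gamma> psi j x s' = psi j x - \<gamma> * psi_pi Am pol psi j s'"

definition lambda_min :: "real mat \<Rightarrow> real" where
  "lambda_min A = Min {k. eigenvalue A k}"

definition e_J :: "'s measure \<Rightarrow> 'a measure \<Rightarrow> ('s \<Rightarrow> 'a \<Rightarrow> 's \<Rightarrow> real) \<Rightarrow> ('s \<times> 'a \<Rightarrow> real)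
    \<Rightarrow> ('s \<Rightarrow> 'a \<Rightarrow> real) \<Rightarrow> real \<Rightarrow> nat \<Rightarrow> (nat \<Rightarrow> 's \<times> 'a \<Rightarrow> real) \<Rightarrow> real" where
  "e_J Sm Am q d pol \<gamma> J psi = lambda_min (mat J J (\<lambda>(i, j).
      Exp3 Sm Am q d (\<lambda>x s'. kappa Am pol \<gamma> psi i x s' * kappa Am pol \<gamma> psi j x s')))"

definition omega_J :: "'s measure \<Rightarrow> 'a measure \<Rightarrow> ('s \<times> 'a \<Rightarrow> real)
    \<Rightarrow> nat \<Rightarrow> (nat \<Rightarrow> 's \<times> 'a \<Rightarrow> real) \<Rightarrow> real" where
  "omega_J Sm Am d J psi = lambda_min (mat J J (\<lambda>(i, j).
      \<integral>x. d x * psi i x * psi j x \<partial>SAM Sm Am))"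

end

theory Submission
  imports Defs
begin

lemma wjensen:
  fixes w h :: "'b \<Rightarrow> real"
  assumes w0: "\<forall>x\<in>space N. 0 \<le> w x" and wi: "integrable N w" and w1: "(\<integral>x. w x \<partial>N) = 1"
    and hm: "h \<in> borel_measurable N"
  shows "ennreal ((\<integral>x. w x * h x \<partial>N)^2) \<le> (\<integral>\<^sup>+x. ennreal (w x * (h x)^2) \<partial>N)"
proof -
  have wm: "w \<in> borel_measurable N" using wi by simp
  show ?thesis
  proof (cases "integrable N (\<lambda>x. w x * h x)")
    case False
    then show ?thesis by (simp add: not_integrable_integral_eq)
  next
    case wh: True
    show ?thesis
    proof (cases "integrable N (\<lambda>x. w x * (h x)^2)")
      case False
      have "(\<integral>\<^sup>+x. ennreal (w x * (h x)^2) \<partial>N) = \<infinity>"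
      proof (rule ccontr)
        assume "(\<integral>\<^sup>+x. ennreal (w x * (h x)^2) \<partial>N) \<noteq> \<infinity>"
        then have "(\<integral>\<^sup>+x. ennreal (w x * (h x)^2) \<partial>N) < \<infinity>" by (simp add: less_top)
        then have "integrable N (\<lambda>x. w x * (h x)^2)"
          using wm hm w0 by (intro integrableI_nonneg) (auto intro!: AE_I2)
        with False show False by simp
      qed
      then show ?thesis by simp
    next
      case whh: True
      define c where "c = (\<integral>x. w x * h x \<partial>N)"
      have "0 \<le> (\<integral>x. w x * (h x - c)^2 \<partial>N)"
        using w0 by (intro integral_nonneg_AE AE_I2) auto
      also have "(\<integral>x. w x * (h x - c)^2 \<partial>N)
          = (\<integral>x. w x * (h x)^2 - (2 * c) * (w x * h x) + c^2 * w x \<partial>N)"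
        by (intro Bochner_Integration.integral_cong) (auto simp: power2_eq_square algebra_simps)
      also have "\<dots> = (\<integral>x. w x * (h x)^2 \<partial>N) - (2 * c) * c + c^2 * 1"
        using wh whh wi unfolding c_def[symmetric] w1[symmetric]
        by (simp add: c_def)
      finally have "c^2 \<le> (\<integral>x. w x * (h x)^2 \<partial>N)" by (simp add: power2_eq_square)
      then have "ennreal (c^2) \<le> ennreal (\<integral>x. w x * (h x)^2 \<partial>N)" by (rule ennreal_leI)
      also have "\<dots> = (\<integral>\<^sup>+x. ennreal (w x * (h x)^2) \<partial>N)"
        using whh w0 by (intro nn_integral_eq_integral[symmetric] AE_I2) auto
      finally show ?thesis unfolding c_def .
    qed
  qed
qed

lemma wl2_int:
  fixes w h :: "'b \<Rightarrow> real"
  assumes w0: "\<forall>x\<in>space N. 0 \<le> w x" and wi: "integrable N w"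
    and hm: "h \<in> borel_measurable N"
    and fin: "(\<integral>\<^sup>+x. ennreal (w x * (h x)^2) \<partial>N) < \<infinity>"
  shows "integrable N (\<lambda>x. w x * h x)"
proof -
  have wm: "w \<in> borel_measurable N" using wi by simp
  have i2: "integrable N (\<lambda>x. w x * (h x)^2)"
    using wm hm w0 fin by (intro integrableI_nonneg) (auto intro!: AE_I2)
  have "integrable N (\<lambda>x. w x + w x * (h x)^2)" using wi i2 by simp
  then show ?thesis
  proof (rule Bochner_Integration.integrable_bound)
    show "(\<lambda>x. w x * h x) \<in> borel_measurable N" using wm hm by simp
    show "AE x in N. norm (w x * h x) \<le> norm (w x + w x * (h x)^2)"
    proof (rule AE_I2)
      fix x assume x: "x \<in> space N"
      have hb: "\<bar>h x\<bar> \<le> 1 + (h x)^2"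
      proof (cases "\<bar>h x\<bar> \<le> 1")
        case True
        have "0 \<le> (h x)^2" by simp
        then show ?thesis using True by linarith
      next
        case False
        have "\<bar>h x\<bar> * 1 \<le> \<bar>h x\<bar> * \<bar>h x\<bar>" using False by (intro mult_left_mono) auto
        then have "\<bar>h x\<bar> \<le> (h x)^2" by (simp add: power2_eq_square)
        then show ?thesis by linarith
      qed
      have "norm (w x * h x) = w x * \<bar>h x\<bar>" using w0 x by (simp add: abs_mult)
      also have "\<dots> \<le> w x * (1 + (h x)^2)" using w0 x hb by (simp add: mult_left_mono)
      also have "\<dots> = norm (w x + w x * (h x)^2)" using w0 x by (simp add: algebra_simps)
      finally show "norm (w x * h x) \<le> norm (w x + w x * (h x)^2)" .
    qed
  qed
qed

lemma wbound:
  fixes w g :: "'b \<Rightarrow> real"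
  assumes w0: "\<forall>x\<in>space N. 0 \<le> w x" and wi: "integrable N w" and w1: "(\<integral>x. w x \<partial>N) = 1"
    and gm: "g \<in> borel_measurable N" and gb: "\<forall>x\<in>space N. \<bar>g x\<bar> \<le> B"
  shows "integrable N (\<lambda>x. w x * g x)" and "\<bar>\<integral>x. w x * g x \<partial>N\<bar> \<le> B"
proof -
  have wm: "w \<in> borel_measurable N" using wi by simp
  have wB: "integrable N (\<lambda>x. w x * B)" using wi by simp
  show int: "integrable N (\<lambda>x. w x * g x)"
    using wB
  proof (rule Bochner_Integration.integrable_bound)
    show "(\<lambda>x. w x * g x) \<in> borel_measurable N" using wm gm by simp
    show "AE x in N. norm (w x * g x) \<le> norm (w x * B)"
      using w0 gb by (intro AE_I2) (auto simp: abs_mult intro!: mult_left_mono order.trans[OF _ abs_ge_self])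
  qed
  have "\<bar>\<integral>x. w x * g x \<partial>N\<bar> \<le> (\<integral>x. \<bar>w x * g x\<bar> \<partial>N)" by (rule integral_abs_bound)
  also have "\<dots> \<le> (\<integral>x. w x * B \<partial>N)"
    using w0 gb by (intro integral_mono[OF integrable_abs[OF int] wB]) (auto simp: abs_mult intro!: mult_left_mono)
  also have "\<dots> = B" using w1 by simp
  finally show "\<bar>\<integral>x. w x * g x \<partial>N\<bar> \<le> B" .
qed

lemma quad_vec:
  fixes E :: "nat \<Rightarrow> nat \<Rightarrow> real"
  assumes "v \<in> carrier_vec J"
  shows "scalar_prod v (mat J J (\<lambda>(i,j). E i j) *\<^sub>v v) = (\<Sum>i<J. \<Sum>j<J. vec_index v i * vec_index v j * E i j)"
  using assms
  by (auto simp: scalar_prod_def mult_mat_vec_def row_def sum_distrib_left atLeast0LessThan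
      intro!: sum.cong)

definition QF :: "nat \<Rightarrow> (nat \<Rightarrow> nat \<Rightarrow> real) \<Rightarrow> (nat \<Rightarrow> real) \<Rightarrow> real" where
  "QF J E w = (\<Sum>i<J. \<Sum>j<J. w i * w j * E i j)"

definition NS :: "nat \<Rightarrow> (nat \<Rightarrow> real) \<Rightarrow> real" where
  "NS J w = (\<Sum>i<J. (w i)^2)"

lemma QF_scale: "QF J E (\<lambda>i. c * w i) = c^2 * QF J E w"
  unfolding QF_def by (simp add: sum_distrib_left power2_eq_square algebra_simps)

lemma NS_scale: "NS J (\<lambda>i. c * w i) = c^2 * NS J w"
  unfolding NS_def by (simp add: sum_distrib_left power_mult_distrib)

lemma NS_nonneg: "NS J w \<ge> 0" unfolding NS_def by (simp add: sum_nonneg)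

lemma NS_pos: "NS J w > 0 \<longleftrightarrow> (\<exists>i<J. w i \<noteq> 0)"
proof
  assume "NS J w > 0"
  show "\<exists>i<J. w i \<noteq> 0"
  proof (rule ccontr)
    assume "\<not> (\<exists>i<J. w i \<noteq> 0)"
    then have "NS J w = 0" unfolding NS_def by (auto intro!: sum.neutral)
    then show False using \<open>NS J w > 0\<close> by simp
  qed
next
  assume "\<exists>i<J. w i \<noteq> 0"
  then obtain i where i: "i < J" "w i \<noteq> 0" by blast
  then have "(w i)^2 \<le> NS J w" unfolding NS_def by (intro member_le_sum) auto
  moreover have "(w i)^2 > 0" using i by simp
  ultimately show "NS J w > 0" by linarith
qed

lemma QF_add:
  assumes sym: "\<forall>i<J. \<forall>j<J. E i j = E j i"
  shows "QF J E (\<lambda>i. a i + t * b i) = QF J E a + 2 * t * (\<Sum>i<J. b i * (\<Sum>j<J. E i j * a j)) + t^2 * QF J E b"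
proof -
  have "QF J E (\<lambda>i. a i + t * b i) = QF J E a + t * ((\<Sum>i<J. \<Sum>j<J. a i * b j * E i j) + (\<Sum>i<J. \<Sum>j<J. b i * a j * E i j)) + t^2 * QF J E b"
    unfolding QF_def
    by (simp add: algebra_simps power2_eq_square sum.distrib sum_distrib_left)
  moreover have "(\<Sum>i<J. \<Sum>j<J. a i * b j * E i j) = (\<Sum>i<J. \<Sum>j<J. b i * a j * E i j)"
    apply (subst sum.swap)
    using sym by (auto intro!: sum.cong simp: algebra_simps)
  moreover have "(\<Sum>i<J. \<Sum>j<J. b i * a j * E i j) = (\<Sum>i<J. b i * (\<Sum>j<J. E i j * a j))"
    by (simp add: sum_distrib_left algebra_simps)
  ultimately show ?thesis by simp
qed

lemma NS_add: "NS J (\<lambda>i. a i + t * b i) = NS J a + 2 * t * (\<Sum>i<J. b i * a i) + t^2 * NS J b"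
  unfolding NS_def
  by (simp add: algebra_simps power2_eq_square sum.distrib sum_distrib_left)

lemma exists_min_rayleigh:
  fixes E :: "nat \<Rightarrow> nat \<Rightarrow> real"
  assumes "J \<ge> 1"
  shows "\<exists>w0. NS J w0 = 1 \<and> (\<forall>w. QF J E w0 * NS J w \<le> QF J E w)"
proof -
  let ?X = "product_topology (\<lambda>_. euclideanreal) {..<J}"
  let ?K = "PiE {..<J} (\<lambda>_. {-1..1::real})"
  let ?S = "{w \<in> topspace ?X. NS J w \<in> {1}}"
  have cK: "compactin ?X ?K"
    by (subst compactin_PiE) auto
  have cNS: "continuous_map ?X euclideanreal (NS J)"
    unfolding NS_def
    by (intro continuous_map_sum continuous_intros) auto
  have cQ: "continuous_map ?X euclideanreal (QF J E)"
    unfolding QF_def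
    by (intro continuous_map_sum continuous_intros) auto
  have clS: "closedin ?X ?S"
    by (rule closedin_continuous_map_preimage[OF cNS]) auto
  have SK: "?S \<subseteq> ?K"
  proof
    fix w assume w: "w \<in> ?S"
    have "(w i)^2 \<le> 1" if "i < J" for i
    proof -
      have "(w i)^2 \<le> NS J w" unfolding NS_def
        using that by (intro member_le_sum) auto
      then show ?thesis using w by simp
    qed
    then have "\<bar>w i\<bar> \<le> 1" if "i < J" for i
      using that by (simp add: abs_square_le_1)
    then show "w \<in> ?K" using w by (auto simp: PiE_iff abs_le_iff)
  qed
  have cS: "compactin ?X ?S" by (rule closed_compactin[OF cK SK clS])
  have "compactin euclideanreal (QF J E ` ?S)" by (rule image_compactin[OF cS cQ])
  then have comp: "compact (QF J E ` ?S)" by simp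
  define e0 :: "nat \<Rightarrow> real" where "e0 = (\<lambda>i. if i < J then (if i = 0 then 1 else 0) else undefined)"
  have "NS J e0 = (\<Sum>i<J. if i = 0 then 1 else 0)" unfolding NS_def e0_def
    by (intro sum.cong) auto
  also have "\<dots> = 1" using assms by (simp add: sum.delta)
  finally have "NS J e0 = 1" .
  then have "e0 \<in> ?S" by (auto simp: e0_def PiE_iff extensional_def)
  then have "QF J E ` ?S \<noteq> {}" by blast
  from compact_attains_inf[OF comp this] obtain w0 where w0: "w0 \<in> ?S"
    and min: "\<forall>w\<in>?S. QF J E w0 \<le> QF J E w" by auto
  show ?thesis
  proof (intro exI conjI allI)
    show "NS J w0 = 1" using w0 by simp
    fix w
    show "QF J E w0 * NS J w \<le> QF J E w"
    proof (cases "NS J w = 0")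
      case True
      then have "\<forall>i<J. w i = 0" using NS_pos[of J w] by auto
      then have "QF J E w = 0" unfolding QF_def by simp
      then show ?thesis using True by simp
    next
      case False
      then have pos: "NS J w > 0" using NS_nonneg[of J w] by simp
      define c where "c = 1 / sqrt (NS J w)"
      define w' where "w' = (\<lambda>i. if i < J then c * w i else undefined)"
      have "NS J w' = NS J (\<lambda>i. c * w i)" unfolding NS_def w'_def by simp
      also have "\<dots> = c^2 * NS J w" by (rule NS_scale)
      also have "\<dots> = 1" using pos by (simp add: c_def power_divide)
      finally have "w' \<in> ?S" by (auto simp: w'_def PiE_iff extensional_def)
      then have "QF J E w0 \<le> QF J E w'" using min by blast
      also have "QF J E w' = QF J E (\<lambda>i. c * w i)" unfolding QF_def w'_def by simp
      also have "\<dots> = c^2 * QF J E w" by (rule QF_scale)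
      finally have "QF J E w0 \<le> QF J E w / NS J w" using pos by (simp add: c_def power_divide)
      then show ?thesis using pos by (simp add: pos_le_divide_eq)
    qed
  qed
qed

lemma quad_nonneg_contra:
  fixes N C :: real
  assumes N: "N > 0" and H: "\<forall>t. 0 \<le> 2 * t * N + t^2 * C"
  shows False
proof -
  define t where "t = - N / (\<bar>C\<bar> + 1)"
  have tneg: "t < 0" using N by (simp add: t_def)
  have "t * \<bar>C\<bar> \<ge> - N"
  proof -
    have "t * \<bar>C\<bar> = - N * (\<bar>C\<bar> / (\<bar>C\<bar> + 1))" by (simp add: t_def)
    moreover have "\<bar>C\<bar> / (\<bar>C\<bar> + 1) \<le> 1" by simp
    moreover have "N * (\<bar>C\<bar> / (\<bar>C\<bar> + 1)) \<le> N * 1"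
      using N by (intro mult_left_mono) auto
    ultimately show ?thesis by linarith
  qed
  then have "2 * N + t * \<bar>C\<bar> > 0" using N by linarith
  then have "t * (2 * N + t * \<bar>C\<bar>) < 0" using tneg by (simp add: mult_neg_pos)
  moreover have "t^2 * C \<le> t^2 * \<bar>C\<bar>" by (simp add: mult_left_mono)
  ultimately have "2 * t * N + t^2 * C < 0" by (simp add: power2_eq_square algebra_simps)
  with H show False by (meson not_le)
qed

lemma min_is_eigen:
  fixes E :: "nat \<Rightarrow> nat \<Rightarrow> real"
  assumes sym: "\<forall>i<J. \<forall>j<J. E i j = E j i"
    and w0: "NS J w0 = 1" and min: "\<forall>w. QF J E w0 * NS J w \<le> QF J E w"
  shows "\<forall>i<J. (\<Sum>j<J. E i j * w0 j) = QF J E w0 * w0 i"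
proof (rule ccontr)
  let ?mu = "QF J E w0"
  define r where "r = (\<lambda>i. (\<Sum>j<J. E i j * w0 j) - ?mu * w0 i)"
  assume "\<not> ?thesis"
  then have "\<exists>i<J. r i \<noteq> 0" unfolding r_def by auto
  then have N: "NS J r > 0" using NS_pos by blast
  have "\<forall>t. 0 \<le> 2 * t * NS J r + t^2 * (QF J E r - ?mu * NS J r)"
  proof
    fix t
    have "?mu * NS J (\<lambda>i. w0 i + t * r i) \<le> QF J E (\<lambda>i. w0 i + t * r i)" using min by blast
    then have "?mu * (1 + 2 * t * (\<Sum>i<J. r i * w0 i) + t^2 * NS J r)
      \<le> ?mu + 2 * t * (\<Sum>i<J. r i * (\<Sum>j<J. E i j * w0 j)) + t^2 * QF J E r"
      unfolding NS_add QF_add[OF sym] w0 .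
    moreover have "(\<Sum>i<J. r i * (\<Sum>j<J. E i j * w0 j)) - ?mu * (\<Sum>i<J. r i * w0 i) = NS J r"
    proof -
      have "(\<Sum>i<J. r i * (\<Sum>j<J. E i j * w0 j)) - ?mu * (\<Sum>i<J. r i * w0 i)
          = (\<Sum>i<J. r i * ((\<Sum>j<J. E i j * w0 j) - ?mu * w0 i))"
        by (simp add: sum_subtractf sum_distrib_left right_diff_distrib mult.left_commute)
      also have "\<dots> = (\<Sum>i<J. (r i)^2)"
        by (intro sum.cong) (simp_all add: r_def power2_eq_square)
      finally show ?thesis by (simp add: NS_def)
    qed
    ultimately show "0 \<le> 2 * t * NS J r + t^2 * (QF J E r - ?mu * NS J r)"
      by (simp add: algebra_simps)
  qed
  with quad_nonneg_contra[OF N] show False by blast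
qed

lemma lambda_min_char:
  fixes E :: "nat \<Rightarrow> nat \<Rightarrow> real"
  assumes J: "J \<ge> 1" and sym: "\<forall>i<J. \<forall>j<J. E i j = E j i"
  shows "\<exists>v. NS J v > 0 \<and> lambda_min (mat J J (\<lambda>(i,j). E i j)) * NS J v = QF J E v"
    and "\<forall>w. lambda_min (mat J J (\<lambda>(i,j). E i j)) * NS J w \<le> QF J E w"
proof -
  define M where "M = mat J J (\<lambda>(i,j). E i j)"
  have Mc: "M \<in> carrier_mat J J" unfolding M_def by simp
  obtain w0 where w0: "NS J w0 = 1" and min: "\<forall>w. QF J E w0 * NS J w \<le> QF J E w"
    using exists_min_rayleigh[OF J] by blast
  let ?mu = "QF J E w0"
  have ev: "\<forall>i<J. (\<Sum>j<J. E i j * w0 j) = ?mu * w0 i" by (rule min_is_eigen[OF sym w0 min])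
  have "eigenvector M (vec J w0) ?mu"
    unfolding eigenvector_def
  proof (intro conjI)
    show "vec J w0 \<in> carrier_vec (dim_row M)" using Mc by simp
    have "\<exists>i<J. w0 i \<noteq> 0" using w0 NS_pos[of J w0] by simp
    then show "vec J w0 \<noteq> 0\<^sub>v (dim_row M)" using Mc
      by (auto simp: vec_eq_iff)
    show "M *\<^sub>v vec J w0 = ?mu \<cdot>\<^sub>v vec J w0"
      using ev by (auto simp: M_def mult_mat_vec_def scalar_prod_def row_def atLeast0LessThan
          intro!: eq_vecI)
  qed
  then have evmu: "eigenvalue M ?mu" unfolding eigenvalue_def by blast
  have "char_poly M \<noteq> 0" using degree_monic_char_poly[OF Mc] by auto
  then have fin: "finite {k. eigenvalue M k}"
    using eigenvalue_root_char_poly[OF Mc] poly_roots_finite by simp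
  have ne: "{k. eigenvalue M k} \<noteq> {}" using evmu by blast
  define lam where "lam = lambda_min M"
  have lamin: "eigenvalue M lam" unfolding lam_def lambda_min_def using Min_in[OF fin ne] by simp
  have lamle: "lam \<le> ?mu" unfolding lam_def lambda_min_def using Min_le[OF fin] evmu by simp
  from lamin obtain v where v: "eigenvector M v lam" unfolding eigenvalue_def by blast
  then have vc: "v \<in> carrier_vec J" and vnz: "v \<noteq> 0\<^sub>v J" and Mv: "M *\<^sub>v v = lam \<cdot>\<^sub>v v"
    unfolding eigenvector_def using Mc by auto
  define vf where "vf = (\<lambda>i. vec_index v i)"
  have "\<exists>i<J. vf i \<noteq> 0"
  proof (rule ccontr)
    assume "\<not> ?thesis"
    then have "v = 0\<^sub>v J" using vc by (auto simp: vf_def intro!: eq_vecI)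
    with vnz show False by simp
  qed
  then have vpos: "NS J vf > 0" using NS_pos by blast
  have "scalar_prod v (M *\<^sub>v v) = QF J E vf" unfolding M_def QF_def vf_def by (rule quad_vec[OF vc])
  moreover have "scalar_prod v (M *\<^sub>v v) = lam * NS J vf"
    unfolding Mv using vc
    by (simp add: scalar_prod_def NS_def vf_def atLeast0LessThan sum_distrib_left power2_eq_square algebra_simps)
  ultimately have lv: "lam * NS J vf = QF J E vf" by simp
  then have "?mu * NS J vf \<le> lam * NS J vf" using min by simp
  then have "?mu \<le> lam" using vpos by simp
  then have eq: "lam = ?mu" using lamle by simp
  show "\<exists>v. NS J v > 0 \<and> lambda_min (mat J J (\<lambda>(i,j). E i j)) * NS J v = QF J E v"
    using lv vpos unfolding lam_def M_def by blast
  show "\<forall>w. lambda_min (mat J J (\<lambda>(i,j). E i j)) * NS J w \<le> QF J E w"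
    using min eq unfolding lam_def M_def by simp
qed

definition Hop :: "'a measure \<Rightarrow> ('s \<Rightarrow> 'a \<Rightarrow> real) \<Rightarrow> ('s \<times> 'a \<Rightarrow> real) \<Rightarrow> 's \<Rightarrow> real" where
  "Hop Am pol h s = (\<integral>a. pol s a * h (s, a) \<partial>Am)"

definition Pop :: "'s measure \<Rightarrow> 'a measure \<Rightarrow> ('s \<Rightarrow> 'a \<Rightarrow> 's \<Rightarrow> real) \<Rightarrow> ('s \<Rightarrow> 'a \<Rightarrow> real)
   \<Rightarrow> ('s \<times> 'a \<Rightarrow> real) \<Rightarrow> 's \<times> 'a \<Rightarrow> real" where
  "Pop Sm Am q pol h x = (\<integral>s'. q (fst x) (snd x) s' * Hop Am pol h s' \<partial>Sm)"

locale setting =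
  fixes Sm :: "'s measure" and Am :: "'a measure"
    and q :: "'s \<Rightarrow> 'a \<Rightarrow> 's \<Rightarrow> real" and pol :: "'s \<Rightarrow> 'a \<Rightarrow> real" and d :: "'s \<times> 'a \<Rightarrow> real"
    and p2max :: real
  assumes sfS: "sigma_finite_measure Sm" and sfA: "sigma_finite_measure Am"
    and qm: "(\<lambda>(x, s'). q (fst x) (snd x) s') \<in> borel_measurable (SAM Sm Am \<Otimes>\<^sub>M Sm)"
    and q_prop: "\<forall>x\<in>space (SAM Sm Am). (\<forall>s'\<in>space Sm. q (fst x) (snd x) s' \<ge> 0)
          \<and> integrable Sm (q (fst x) (snd x)) \<and> (\<integral>s'. q (fst x) (snd x) s' \<partial>Sm) = 1"
    and polm: "(\<lambda>x. pol (fst x) (snd x)) \<in> borel_measurable (SAM Sm Am)"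
    and pol_prop: "\<forall>s\<in>space Sm. (\<forall>a\<in>space Am. pol s a \<ge> 0)
          \<and> integrable Am (pol s) \<and> (\<integral>a. pol s a \<partial>Am) = 1"
    and qpol: "\<forall>x\<in>space (SAM Sm Am). \<forall>s'\<in>space Sm. \<forall>a'\<in>space Am.
          q (fst x) (snd x) s' * pol s' a' \<le> p2max"
    and p2pos: "p2max > 0"
begin

abbreviation "M \<equiv> SAM Sm Am"
abbreviation "Q x s' \<equiv> q (fst x) (snd x) s'"
abbreviation "H \<equiv> Hop Am pol"
abbreviation "P \<equiv> Pop Sm Am q pol"
definition "L2 (h :: 's \<times> 'a \<Rightarrow> real) \<longleftrightarrow> h \<in> borel_measurable M \<and> integrable M (\<lambda>y. (h y)^2)"
definition "nrm (h :: 's \<times> 'a \<Rightarrow> real) = (\<integral>y. (h y)^2 \<partial>M)"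

lemma M_def': "M = Sm \<Otimes>\<^sub>M Am" by (simp add: SAM_def)

lemma space_M: "space M = space Sm \<times> space Am" by (simp add: SAM_def space_pair_measure)

lemma polm': "(\<lambda>x. pol (fst x) (snd x)) \<in> borel_measurable (Sm \<Otimes>\<^sub>M Am)" using polm by (simp add: SAM_def)

lemma Hm: assumes "h \<in> borel_measurable M" shows "H h \<in> borel_measurable Sm"
proof -
  have "(\<lambda>(s, a). pol s a * h (s, a)) = (\<lambda>x. pol (fst x) (snd x) * h x)" by auto
  moreover have "(\<lambda>x. pol (fst x) (snd x) * h x) \<in> borel_measurable (Sm \<Otimes>\<^sub>M Am)"
    using polm' assms by (simp add: SAM_def)
  ultimately have "case_prod (\<lambda>s a. pol s a * h (s, a)) \<in> borel_measurable (Sm \<Otimes>\<^sub>M Am)" by simp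
  then show ?thesis unfolding Hop_def[abs_def]
    by (rule sigma_finite_measure.borel_measurable_lebesgue_integral[OF sfA])
qed

lemma Pm: assumes "h \<in> borel_measurable M" shows "P h \<in> borel_measurable M"
proof -
  have "(\<lambda>z. (\<lambda>(x, s'). q (fst x) (snd x) s') z * H h (snd z)) \<in> borel_measurable (M \<Otimes>\<^sub>M Sm)"
    using qm measurable_compose[OF measurable_snd Hm[OF assms]] by (intro borel_measurable_times)
  moreover have "(\<lambda>z. (\<lambda>(x, s'). q (fst x) (snd x) s') z * H h (snd z)) = case_prod (\<lambda>x s'. Q x s' * H h s')"
    by auto
  ultimately have "case_prod (\<lambda>x s'. Q x s' * H h s') \<in> borel_measurable (M \<Otimes>\<^sub>M Sm)" by simp
  then show ?thesis unfolding Pop_def[abs_def]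
    by (rule sigma_finite_measure.borel_measurable_lebesgue_integral[OF sfS])
qed

lemma Qm: assumes "x \<in> space M" shows "(\<lambda>s'. Q x s') \<in> borel_measurable Sm"
  using measurable_Pair2[OF qm assms] by simp

lemma slice_m: assumes "h \<in> borel_measurable M" "s \<in> space Sm"
  shows "(\<lambda>a. h (s, a)) \<in> borel_measurable Am"
  using measurable_Pair2[of h Sm Am borel s] assms by (simp add: SAM_def)

lemma polslice_m: assumes "s \<in> space Sm" shows "pol s \<in> borel_measurable Am"
  using pol_prop assms by auto

lemma chain:
  assumes x: "x \<in> space M" and hm: "h \<in> borel_measurable M"
  shows "(\<integral>\<^sup>+s'. ennreal (Q x s') * (\<integral>\<^sup>+a. ennreal (pol s' a * (h (s', a))^2) \<partial>Am) \<partial>Sm)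
     \<le> ennreal p2max * (\<integral>\<^sup>+y. ennreal ((h y)^2) \<partial>M)"
proof -
  have hm': "(\<lambda>y. ennreal ((h y)^2)) \<in> borel_measurable (Sm \<Otimes>\<^sub>M Am)" using hm by (simp add: SAM_def)
  have "(\<integral>\<^sup>+s'. ennreal (Q x s') * (\<integral>\<^sup>+a. ennreal (pol s' a * (h (s', a))^2) \<partial>Am) \<partial>Sm)
      \<le> (\<integral>\<^sup>+s'. ennreal p2max * (\<integral>\<^sup>+a. ennreal ((h (s', a))^2) \<partial>Am) \<partial>Sm)"
  proof (intro nn_integral_mono)
    fix s' assume s': "s' \<in> space Sm"
    have "ennreal (Q x s') * (\<integral>\<^sup>+a. ennreal (pol s' a * (h (s', a))^2) \<partial>Am)
        = (\<integral>\<^sup>+a. ennreal (Q x s') * ennreal (pol s' a * (h (s', a))^2) \<partial>Am)"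
      using slice_m[OF hm s'] polslice_m[OF s'] by (intro nn_integral_cmult[symmetric]) simp
    also have "\<dots> \<le> (\<integral>\<^sup>+a. ennreal p2max * ennreal ((h (s', a))^2) \<partial>Am)"
    proof (intro nn_integral_mono)
      fix a assume a: "a \<in> space Am"
      have q0: "Q x s' \<ge> 0" using q_prop x s' by auto
      have p0: "pol s' a \<ge> 0" using pol_prop s' a by auto
      have "ennreal (Q x s') * ennreal (pol s' a * (h (s', a))^2) = ennreal (Q x s' * pol s' a * (h (s', a))^2)"
        using q0 p0 by (simp add: ennreal_mult[symmetric] mult.assoc)
      also have "\<dots> \<le> ennreal (p2max * (h (s', a))^2)"
        using qpol x s' a by (intro ennreal_leI mult_right_mono) auto
      also have "\<dots> = ennreal p2max * ennreal ((h (s', a))^2)"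
        using p2pos by (simp add: ennreal_mult)
      finally show "ennreal (Q x s') * ennreal (pol s' a * (h (s', a))^2) \<le> ennreal p2max * ennreal ((h (s', a))^2)" .
    qed
    also have "\<dots> = ennreal p2max * (\<integral>\<^sup>+a. ennreal ((h (s', a))^2) \<partial>Am)"
      using slice_m[OF hm s'] by (intro nn_integral_cmult) simp
    finally show "ennreal (Q x s') * (\<integral>\<^sup>+a. ennreal (pol s' a * (h (s', a))^2) \<partial>Am)
      \<le> ennreal p2max * (\<integral>\<^sup>+a. ennreal ((h (s', a))^2) \<partial>Am)" .
  qed
  also have "\<dots> = ennreal p2max * (\<integral>\<^sup>+s'. (\<integral>\<^sup>+a. ennreal ((h (s', a))^2) \<partial>Am) \<partial>Sm)"
    by (intro nn_integral_cmult sigma_finite_measure.borel_measurable_nn_integral_fst[OF sfA] hm')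
  also have "(\<integral>\<^sup>+s'. (\<integral>\<^sup>+a. ennreal ((h (s', a))^2) \<partial>Am) \<partial>Sm) = (\<integral>\<^sup>+y. ennreal ((h y)^2) \<partial>M)"
    unfolding M_def' using sigma_finite_measure.nn_integral_fst[OF sfA hm'] by simp
  finally show ?thesis .
qed

lemma Qw: assumes "x \<in> space M"
  shows "\<forall>s'\<in>space Sm. 0 \<le> Q x s'" "integrable Sm (\<lambda>s'. Q x s')" "(\<integral>s'. Q x s' \<partial>Sm) = 1"
  using q_prop assms by auto

lemma polw: assumes "s \<in> space Sm"
  shows "\<forall>a\<in>space Am. 0 \<le> pol s a" "integrable Am (pol s)" "(\<integral>a. pol s a \<partial>Am) = 1"
  using pol_prop assms by auto

lemma L2_fin: assumes "L2 h" shows "(\<integral>\<^sup>+y. ennreal ((h y)^2) \<partial>M) = ennreal (nrm h)"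
  using assms unfolding L2_def nrm_def by (intro nn_integral_eq_integral) auto

lemma nrm_nonneg: "nrm h \<ge> 0" unfolding nrm_def by (intro integral_nonneg_AE AE_I2) simp

lemma H_sq: assumes hm: "h \<in> borel_measurable M" and s: "s \<in> space Sm"
  shows "ennreal ((H h s)^2) \<le> (\<integral>\<^sup>+a. ennreal (pol s a * (h (s, a))^2) \<partial>Am)"
  unfolding Hop_def using polw[OF s] slice_m[OF hm s] by (intro wjensen) auto

lemma QH_sq_nn:
  assumes x: "x \<in> space M" and hm: "h \<in> borel_measurable M"
  shows "(\<integral>\<^sup>+s'. ennreal (Q x s' * (H h s')^2) \<partial>Sm) \<le> ennreal p2max * (\<integral>\<^sup>+y. ennreal ((h y)^2) \<partial>M)"
proof -
  have "(\<integral>\<^sup>+s'. ennreal (Q x s' * (H h s')^2) \<partial>Sm)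
      \<le> (\<integral>\<^sup>+s'. ennreal (Q x s') * (\<integral>\<^sup>+a. ennreal (pol s' a * (h (s', a))^2) \<partial>Am) \<partial>Sm)"
  proof (intro nn_integral_mono)
    fix s' assume s': "s' \<in> space Sm"
    have "ennreal (Q x s' * (H h s')^2) = ennreal (Q x s') * ennreal ((H h s')^2)"
      using Qw[OF x] s' by (simp add: ennreal_mult)
    also have "\<dots> \<le> ennreal (Q x s') * (\<integral>\<^sup>+a. ennreal (pol s' a * (h (s', a))^2) \<partial>Am)"
      by (intro mult_left_mono H_sq[OF hm s']) simp
    finally show "ennreal (Q x s' * (H h s')^2) \<le> ennreal (Q x s') * (\<integral>\<^sup>+a. ennreal (pol s' a * (h (s', a))^2) \<partial>Am)" .
  qed
  also have "\<dots> \<le> ennreal p2max * (\<integral>\<^sup>+y. ennreal ((h y)^2) \<partial>M)" by (rule chain[OF x hm])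
  finally show ?thesis .
qed

lemma P_facts:
  assumes x: "x \<in> space M" and h: "L2 h"
  shows "integrable Sm (\<lambda>s'. Q x s' * H h s')"
    and "integrable Sm (\<lambda>s'. Q x s' * (H h s')^2)"
    and "(\<integral>s'. Q x s' * (H h s')^2 \<partial>Sm) \<le> p2max * nrm h"
    and "(P h x)^2 \<le> p2max * nrm h"
proof -
  have hm: "h \<in> borel_measurable M" using h by (simp add: L2_def)
  have Hm': "H h \<in> borel_measurable Sm" by (rule Hm[OF hm])
  have bnd: "(\<integral>\<^sup>+s'. ennreal (Q x s' * (H h s')^2) \<partial>Sm) \<le> ennreal (p2max * nrm h)"
    using QH_sq_nn[OF x hm] unfolding L2_fin[OF h] using p2pos nrm_nonneg[of h]
    by (simp add: ennreal_mult)
  then have fin: "(\<integral>\<^sup>+s'. ennreal (Q x s' * (H h s')^2) \<partial>Sm) < \<infinity>"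
    using le_less_trans[OF bnd ennreal_less_top] by simp
  show i1: "integrable Sm (\<lambda>s'. Q x s' * H h s')"
    using Qw[OF x] Hm' fin by (intro wl2_int) auto
  show i2: "integrable Sm (\<lambda>s'. Q x s' * (H h s')^2)"
    using Qw[OF x] Hm' fin Qm[OF x] by (intro integrableI_nonneg) (auto intro!: AE_I2)
  have eq: "(\<integral>\<^sup>+s'. ennreal (Q x s' * (H h s')^2) \<partial>Sm) = ennreal (\<integral>s'. Q x s' * (H h s')^2 \<partial>Sm)"
    using i2 Qw[OF x] by (intro nn_integral_eq_integral) (auto intro!: AE_I2)
  show le: "(\<integral>s'. Q x s' * (H h s')^2 \<partial>Sm) \<le> p2max * nrm h"
    using bnd unfolding eq
    by (subst (asm) ennreal_le_iff) (simp_all add: p2pos nrm_nonneg less_imp_le)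
  have "ennreal ((P h x)^2) \<le> (\<integral>\<^sup>+s'. ennreal (Q x s' * (H h s')^2) \<partial>Sm)"
    unfolding Pop_def using Qw[OF x] Hm' by (intro wjensen) auto
  then have "ennreal ((P h x)^2) \<le> ennreal (\<integral>s'. Q x s' * (H h s')^2 \<partial>Sm)" unfolding eq .
  then have "(P h x)^2 \<le> (\<integral>s'. Q x s' * (H h s')^2 \<partial>Sm)"
    using i2 Qw[OF x] by (subst (asm) ennreal_le_iff) (auto intro!: integral_nonneg_AE AE_I2)
  then show "(P h x)^2 \<le> p2max * nrm h" using le by linarith
qed

lemma AE_slice_int:
  assumes x: "x \<in> space M" and h: "L2 h"
  shows "AE s' in Sm. Q x s' \<noteq> 0 \<longrightarrow> integrable Am (\<lambda>a. pol s' a * h (s', a))"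
proof -
  have hm: "h \<in> borel_measurable M" using h by (simp add: L2_def)
  have hm': "(\<lambda>y. ennreal (pol (fst y) (snd y) * (h y)^2)) \<in> borel_measurable (Sm \<Otimes>\<^sub>M Am)"
    using hm polm' by (simp add: SAM_def)
  have "(\<integral>\<^sup>+s'. ennreal (Q x s') * (\<integral>\<^sup>+a. ennreal (pol s' a * (h (s', a))^2) \<partial>Am) \<partial>Sm) \<noteq> \<infinity>"
  proof -
    have A: "(\<integral>\<^sup>+s'. ennreal (Q x s') * (\<integral>\<^sup>+a. ennreal (pol s' a * (h (s', a))^2) \<partial>Am) \<partial>Sm) \<le> ennreal p2max * ennreal (nrm h)"
      using chain[OF x hm] unfolding L2_fin[OF h] .
    have B: "ennreal p2max * ennreal (nrm h) < \<infinity>" by (simp add: ennreal_mult_less_top)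
    from le_less_trans[OF A B] show ?thesis by simp
  qed
  moreover have "(\<lambda>s'. ennreal (Q x s') * (\<integral>\<^sup>+a. ennreal (pol s' a * (h (s', a))^2) \<partial>Am)) \<in> borel_measurable Sm"
    using Qm[OF x] sigma_finite_measure.borel_measurable_nn_integral_fst[OF sfA hm'] by simp
  ultimately have ae: "AE s' in Sm. ennreal (Q x s') * (\<integral>\<^sup>+a. ennreal (pol s' a * (h (s', a))^2) \<partial>Am) \<noteq> \<infinity>"
    by (intro nn_integral_PInf_AE)
  show ?thesis
  proof (rule AE_mp[OF ae], rule AE_I2, intro impI)
    fix s' assume s': "s' \<in> space Sm"
      and ne: "ennreal (Q x s') * (\<integral>\<^sup>+a. ennreal (pol s' a * (h (s', a))^2) \<partial>Am) \<noteq> \<infinity>"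
      and q0: "Q x s' \<noteq> 0"
    have "Q x s' > 0" using q0 Qw(1)[OF x] s' by force
    then have "(\<integral>\<^sup>+a. ennreal (pol s' a * (h (s', a))^2) \<partial>Am) < \<infinity>"
      using ne by (auto simp: ennreal_mult_eq_top_iff less_top)
    then show "integrable Am (\<lambda>a. pol s' a * h (s', a))"
      using polw[OF s'] slice_m[OF hm s'] by (intro wl2_int) auto
  qed
qed

lemma L2_lin: assumes "L2 h1" "L2 h2" shows "L2 (\<lambda>y. h1 y + c * h2 y)"
  unfolding L2_def
proof
  have m: "h1 \<in> borel_measurable M" "h2 \<in> borel_measurable M" using assms by (auto simp: L2_def)
  then show "(\<lambda>y. h1 y + c * h2 y) \<in> borel_measurable M" by simp
  have "integrable M (\<lambda>y. 2 * (h1 y)^2 + 2 * c^2 * (h2 y)^2)" using assms by (simp add: L2_def)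
  then show "integrable M (\<lambda>y. (h1 y + c * h2 y)^2)"
  proof (rule Bochner_Integration.integrable_bound)
    show "(\<lambda>y. (h1 y + c * h2 y)^2) \<in> borel_measurable M" using m by simp
    show "AE y in M. norm ((h1 y + c * h2 y)^2) \<le> norm (2 * (h1 y)^2 + 2 * c^2 * (h2 y)^2)"
    proof (rule AE_I2)
      fix y
      have "0 \<le> (h1 y - c * h2 y)^2" by simp
      then have "(h1 y + c * h2 y)^2 \<le> 2 * (h1 y)^2 + 2 * c^2 * (h2 y)^2"
        by (simp add: power2_eq_square algebra_simps)
      then show "norm ((h1 y + c * h2 y)^2) \<le> norm (2 * (h1 y)^2 + 2 * c^2 * (h2 y)^2)"
        by simp
    qed
  qed
qed

lemma L2_zero: "L2 (\<lambda>_. 0)" unfolding L2_def by simp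

lemma L2_sum: assumes "finite I" "\<forall>i\<in>I. L2 (g i)" shows "L2 (\<lambda>y. \<Sum>i\<in>I. c i * g i y)"
  using assms
proof (induction I rule: finite_induct)
  case empty then show ?case by (simp add: L2_zero)
next
  case (insert i I)
  have "L2 (\<lambda>y. (\<Sum>i\<in>I. c i * g i y) + c i * g i y)"
    using insert by (intro L2_lin) auto
  then show ?case using insert by (simp add: add.commute)
qed

lemma L2_bdd:
  assumes fin: "emeasure M (space M) < \<infinity>"
    and hm: "h \<in> borel_measurable M" and hb: "\<forall>y\<in>space M. \<bar>h y\<bar> \<le> B"
  shows "L2 h"
proof -
  interpret finite_measure M using fin by (intro finite_measureI) simp
  have "integrable M (\<lambda>y. B^2)" by simp
  then have "integrable M (\<lambda>y. (h y)^2)"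
  proof (rule Bochner_Integration.integrable_bound)
    show "(\<lambda>y. (h y)^2) \<in> borel_measurable M" using hm by simp
    show "AE y in M. norm ((h y)^2) \<le> norm (B^2)"
    proof (rule AE_I2)
      fix y assume "y \<in> space M"
      then have "\<bar>h y\<bar> \<le> B" using hb by auto
      then have "\<bar>h y\<bar>^2 \<le> B^2" by (intro power_mono) auto
      then show "norm ((h y)^2) \<le> norm (B^2)" by simp
    qed
  qed
  then show ?thesis using hm by (simp add: L2_def)
qed

lemma P_lin:
  assumes x: "x \<in> space M" and h1: "L2 h1" and h2: "L2 h2"
  shows "P (\<lambda>y. h1 y + c * h2 y) x = P h1 x + c * P h2 x"
proof -
  have m1: "h1 \<in> borel_measurable M" and m2: "h2 \<in> borel_measurable M" using h1 h2 by (auto simp: L2_def)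
  have m12: "(\<lambda>y. h1 y + c * h2 y) \<in> borel_measurable M" using m1 m2 by simp
  have ae: "AE s' in Sm. Q x s' * H (\<lambda>y. h1 y + c * h2 y) s' = Q x s' * H h1 s' + c * (Q x s' * H h2 s')"
  proof (rule AE_mp[OF AE_conjI[OF AE_slice_int[OF x h1] AE_slice_int[OF x h2]]], rule AE_I2, intro impI)
    fix s' assume s': "s' \<in> space Sm"
      and ii: "(Q x s' \<noteq> 0 \<longrightarrow> integrable Am (\<lambda>a. pol s' a * h1 (s', a))) \<and>
               (Q x s' \<noteq> 0 \<longrightarrow> integrable Am (\<lambda>a. pol s' a * h2 (s', a)))"
    show "Q x s' * H (\<lambda>y. h1 y + c * h2 y) s' = Q x s' * H h1 s' + c * (Q x s' * H h2 s')"
    proof (cases "Q x s' = 0")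
      case True then show ?thesis by simp
    next
      case False
      then have i1: "integrable Am (\<lambda>a. pol s' a * h1 (s', a))"
        and i2: "integrable Am (\<lambda>a. pol s' a * h2 (s', a))" using ii by auto
      have "H (\<lambda>y. h1 y + c * h2 y) s' = (\<integral>a. pol s' a * h1 (s', a) + c * (pol s' a * h2 (s', a)) \<partial>Am)"
        unfolding Hop_def by (intro Bochner_Integration.integral_cong) (auto simp: algebra_simps)
      also have "\<dots> = H h1 s' + c * H h2 s'"
        unfolding Hop_def using i1 i2 by simp
      finally show ?thesis by (simp add: algebra_simps)
    qed
  qed
  have "P (\<lambda>y. h1 y + c * h2 y) x = (\<integral>s'. Q x s' * H h1 s' + c * (Q x s' * H h2 s') \<partial>Sm)"
    unfolding Pop_def
    using Qm[OF x] Hm[OF m12] Hm[OF m1] Hm[OF m2] ae by (intro integral_cong_AE) auto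
  also have "\<dots> = P h1 x + c * P h2 x"
    unfolding Pop_def using P_facts(1)[OF x h1] P_facts(1)[OF x h2] by simp
  finally show ?thesis .
qed

lemma P_zero: "P (\<lambda>_. 0) x = 0" by (simp add: Pop_def Hop_def)

lemma P_sum:
  assumes x: "x \<in> space M" and "finite I" "\<forall>i\<in>I. L2 (g i)"
  shows "P (\<lambda>y. \<Sum>i\<in>I. c i * g i y) x = (\<Sum>i\<in>I. c i * P (g i) x)"
  using assms(2,3)
proof (induction I rule: finite_induct)
  case empty then show ?case by (simp add: P_zero)
next
  case (insert i I)
  have "P (\<lambda>y. \<Sum>i\<in>insert i I. c i * g i y) x = P (\<lambda>y. (\<Sum>i\<in>I. c i * g i y) + c i * g i y) x"
    using insert by (simp add: add.commute)
  also have "\<dots> = P (\<lambda>y. \<Sum>i\<in>I. c i * g i y) x + c i * P (g i) x"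
    using insert by (intro P_lin[OF x] L2_sum) auto
  finally show ?case using insert by (simp add: add.commute)
qed

lemma P_sup:
  assumes x: "x \<in> space M" and hm: "h \<in> borel_measurable M" and hb: "\<forall>y\<in>space M. \<bar>h y\<bar> \<le> B"
  shows "\<bar>P h x\<bar> \<le> B"
proof -
  have "\<forall>s'\<in>space Sm. \<bar>H h s'\<bar> \<le> B"
  proof
    fix s' assume s': "s' \<in> space Sm"
    show "\<bar>H h s'\<bar> \<le> B" unfolding Hop_def
      using polw[OF s'] slice_m[OF hm s'] hb s' by (intro wbound(2)) (auto simp: space_M)
  qed
  then show ?thesis unfolding Pop_def
    using Qw[OF x] Hm[OF hm] by (intro wbound(2)) auto
qed

end

lemma abs_prod_le: "\<bar>(a::real) * b\<bar> \<le> a^2 + b^2"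
proof -
  have "0 \<le> (\<bar>a\<bar> - \<bar>b\<bar>)^2" by simp
  then have "2 * \<bar>a\<bar> * \<bar>b\<bar> \<le> a^2 + b^2" by (simp add: power2_eq_square algebra_simps)
  then have A: "2 * (\<bar>a\<bar> * \<bar>b\<bar>) \<le> a^2 + b^2" by (simp add: mult.assoc)
  have B: "0 \<le> \<bar>a\<bar> * \<bar>b\<bar>" by simp
  have C: "\<bar>a * b\<bar> = \<bar>a\<bar> * \<bar>b\<bar>" by (simp add: abs_mult)
  from A B C show ?thesis by linarith
qed

lemma wprod_int:
  fixes w u z :: "'b \<Rightarrow> real"
  assumes w0: "\<forall>x\<in>space N. 0 \<le> w x" and wm: "w \<in> borel_measurable N"
    and um: "u \<in> borel_measurable N" and zm: "z \<in> borel_measurable N"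
    and iu: "integrable N (\<lambda>x. w x * (u x)^2)" and iz: "integrable N (\<lambda>x. w x * (z x)^2)"
  shows "integrable N (\<lambda>x. w x * (u x * z x))"
proof -
  have "integrable N (\<lambda>x. w x * (u x)^2 + w x * (z x)^2)" using iu iz by simp
  then show ?thesis
  proof (rule Bochner_Integration.integrable_bound)
    show "(\<lambda>x. w x * (u x * z x)) \<in> borel_measurable N" using wm um zm by simp
    show "AE x in N. norm (w x * (u x * z x)) \<le> norm (w x * (u x)^2 + w x * (z x)^2)"
    proof (rule AE_I2)
      fix x assume x: "x \<in> space N"
      have "\<bar>u x * z x\<bar> \<le> (u x)^2 + (z x)^2" by (rule abs_prod_le)
      then have "w x * \<bar>u x * z x\<bar> \<le> w x * ((u x)^2 + (z x)^2)" using w0 x by (intro mult_left_mono) auto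
      then show "norm (w x * (u x * z x)) \<le> norm (w x * (u x)^2 + w x * (z x)^2)"
        using w0 x by (simp add: abs_mult algebra_simps)
    qed
  qed
qed


lemma sq_sum_le: "((a::real) + b)^2 \<le> 2 * a^2 + 2 * b^2"
proof -
  have "0 \<le> (a - b)^2" by simp
  then show ?thesis by (simp add: power2_eq_square algebra_simps)
qed

locale setting2 = setting +
  fixes \<gamma> pmin p1max :: real
  assumes dm: "d \<in> borel_measurable (SAM Sm Am)" and d0: "\<forall>x\<in>space (SAM Sm Am). 0 \<le> d x"
    and dint: "integrable (SAM Sm Am) d" and d1: "(\<integral>x. d x \<partial>SAM Sm Am) = 1"
    and dAE: "AE x in SAM Sm Am. pmin \<le> d x \<and> d x \<le> p1max"
    and g0: "0 \<le> \<gamma>" and g1: "\<gamma> < 1" and pminpos: "pmin > 0"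
    and finM: "emeasure (SAM Sm Am) (space (SAM Sm Am)) < \<infinity>"
begin

definition "kk h x s' = h x - \<gamma> * H h s'"

lemma dprod_int: assumes "L2 a" "L2 b" shows "integrable M (\<lambda>x. d x * a x * b x)"
proof -
  have "integrable M (\<lambda>x. p1max * ((a x)^2 + (b x)^2))" using assms by (simp add: L2_def)
  then show ?thesis
  proof (rule Bochner_Integration.integrable_bound)
    have "a \<in> borel_measurable M" "b \<in> borel_measurable M" using assms by (auto simp: L2_def)
    then show "(\<lambda>x. d x * a x * b x) \<in> borel_measurable M" using dm by simp
    show "AE x in M. norm (d x * a x * b x) \<le> norm (p1max * ((a x)^2 + (b x)^2))"
    proof (rule AE_mp[OF dAE], rule AE_I2, intro impI)
      fix x assume x: "x \<in> space M" and dx: "pmin \<le> d x \<and> d x \<le> p1max"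
      have "\<bar>d x * a x * b x\<bar> = d x * \<bar>a x * b x\<bar>" using d0 x by (simp add: abs_mult)
      also have "\<dots> \<le> p1max * ((a x)^2 + (b x)^2)"
        using dx d0 x abs_prod_le[of "a x" "b x"] by (intro mult_mono) auto
      finally show "norm (d x * a x * b x) \<le> norm (p1max * ((a x)^2 + (b x)^2))" by simp
    qed
  qed
qed

lemma kk_sq:
  assumes x: "x \<in> space M" and a: "L2 a"
  shows "integrable Sm (\<lambda>s'. Q x s' * (kk a x s')^2)"
    and "(\<integral>s'. Q x s' * (kk a x s')^2 \<partial>Sm) \<le> 2 * (a x)^2 + 2 * p2max * nrm a"
proof -
  have am: "a \<in> borel_measurable M" using a by (simp add: L2_def)
  have i0: "integrable Sm (\<lambda>s'. 2 * (a x)^2 * Q x s' + 2 * \<gamma>^2 * (Q x s' * (H a s')^2))"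
    using Qw[OF x] P_facts(2)[OF x a] by simp
  have bnd: "\<forall>s'\<in>space Sm. Q x s' * (kk a x s')^2 \<le> 2 * (a x)^2 * Q x s' + 2 * \<gamma>^2 * (Q x s' * (H a s')^2)"
  proof
    fix s' assume s': "s' \<in> space Sm"
    have "(kk a x s')^2 \<le> 2 * (a x)^2 + 2 * (\<gamma> * H a s')^2"
      unfolding kk_def using sq_sum_le[of "a x" "- \<gamma> * H a s'"] by simp
    then have "Q x s' * (kk a x s')^2 \<le> Q x s' * (2 * (a x)^2 + 2 * (\<gamma> * H a s')^2)"
      using Qw(1)[OF x] s' by (intro mult_left_mono) auto
    then show "Q x s' * (kk a x s')^2 \<le> 2 * (a x)^2 * Q x s' + 2 * \<gamma>^2 * (Q x s' * (H a s')^2)"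
      by (simp add: algebra_simps power_mult_distrib)
  qed
  show i1: "integrable Sm (\<lambda>s'. Q x s' * (kk a x s')^2)"
    using i0
  proof (rule Bochner_Integration.integrable_bound)
    show "(\<lambda>s'. Q x s' * (kk a x s')^2) \<in> borel_measurable Sm"
      unfolding kk_def using Qm[OF x] Hm[OF am] by simp
    show "AE s' in Sm. norm (Q x s' * (kk a x s')^2) \<le> norm (2 * (a x)^2 * Q x s' + 2 * \<gamma>^2 * (Q x s' * (H a s')^2))"
      using bnd Qw(1)[OF x] by (intro AE_I2) auto
  qed
  have "(\<integral>s'. Q x s' * (kk a x s')^2 \<partial>Sm) \<le> (\<integral>s'. 2 * (a x)^2 * Q x s' + 2 * \<gamma>^2 * (Q x s' * (H a s')^2) \<partial>Sm)"
    using i1 i0 bnd by (intro integral_mono) auto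
  also have "\<dots> = 2 * (a x)^2 + 2 * \<gamma>^2 * (\<integral>s'. Q x s' * (H a s')^2 \<partial>Sm)"
    using Qw[OF x] P_facts(2)[OF x a] by simp
  also have "\<dots> \<le> 2 * (a x)^2 + 2 * 1 * (p2max * nrm a)"
  proof -
    have "\<gamma>^2 \<le> 1" using g0 g1 by (simp add: power_le_one)
    moreover have "0 \<le> (\<integral>s'. Q x s' * (H a s')^2 \<partial>Sm)"
      using Qw(1)[OF x] by (intro integral_nonneg_AE AE_I2) auto
    ultimately have "\<gamma>^2 * (\<integral>s'. Q x s' * (H a s')^2 \<partial>Sm) \<le> 1 * (p2max * nrm a)"
      using P_facts(3)[OF x a] by (intro mult_mono) auto
    then show ?thesis by simp
  qed
  finally show "(\<integral>s'. Q x s' * (kk a x s')^2 \<partial>Sm) \<le> 2 * (a x)^2 + 2 * p2max * nrm a" by simp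
qed

lemma kk_m: assumes "x \<in> space M" "L2 a" shows "kk a x \<in> borel_measurable Sm"
proof -
  have "a \<in> borel_measurable M" using assms by (simp add: L2_def)
  then show ?thesis unfolding kk_def[abs_def] using Hm by simp
qed

lemma kk_prod_int:
  assumes x: "x \<in> space M" and a: "L2 a" and b: "L2 b"
  shows "integrable Sm (\<lambda>s'. Q x s' * (kk a x s' * kk b x s'))"
  using Qw(1)[OF x] Qm[OF x] kk_m[OF x a] kk_m[OF x b] kk_sq(1)[OF x a] kk_sq(1)[OF x b]
  by (rule wprod_int)

definition "II a b x = (\<integral>s'. Q x s' * (kk a x s' * kk b x s') \<partial>Sm)"

lemma II_bound:
  assumes x: "x \<in> space M" and a: "L2 a" and b: "L2 b"
  shows "\<bar>II a b x\<bar> \<le> 2 * (a x)^2 + 2 * (b x)^2 + 2 * p2max * (nrm a + nrm b)"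
proof -
  have "\<bar>II a b x\<bar> \<le> (\<integral>s'. \<bar>Q x s' * (kk a x s' * kk b x s')\<bar> \<partial>Sm)"
    unfolding II_def by (rule integral_abs_bound)
  also have "\<dots> \<le> (\<integral>s'. Q x s' * (kk a x s')^2 + Q x s' * (kk b x s')^2 \<partial>Sm)"
  proof (rule integral_mono)
    show "integrable Sm (\<lambda>s'. \<bar>Q x s' * (kk a x s' * kk b x s')\<bar>)"
      using kk_prod_int[OF x a b] by (rule integrable_abs)
    show "integrable Sm (\<lambda>s'. Q x s' * (kk a x s')^2 + Q x s' * (kk b x s')^2)"
      using kk_sq(1)[OF x a] kk_sq(1)[OF x b] by simp
    fix s' assume s': "s' \<in> space Sm"
    have "\<bar>Q x s' * (kk a x s' * kk b x s')\<bar> = Q x s' * \<bar>kk a x s' * kk b x s'\<bar>"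
      using Qw(1)[OF x] s' by (simp add: abs_mult)
    also have "\<dots> \<le> Q x s' * ((kk a x s')^2 + (kk b x s')^2)"
      using Qw(1)[OF x] s' abs_prod_le by (intro mult_left_mono) auto
    finally show "\<bar>Q x s' * (kk a x s' * kk b x s')\<bar> \<le> Q x s' * (kk a x s')^2 + Q x s' * (kk b x s')^2"
      by (simp add: algebra_simps)
  qed
  also have "\<dots> = (\<integral>s'. Q x s' * (kk a x s')^2 \<partial>Sm) + (\<integral>s'. Q x s' * (kk b x s')^2 \<partial>Sm)"
    using kk_sq(1)[OF x a] kk_sq(1)[OF x b] by simp
  also have "\<dots> \<le> (2 * (a x)^2 + 2 * p2max * nrm a) + (2 * (b x)^2 + 2 * p2max * nrm b)"
    using kk_sq(2)[OF x a] kk_sq(2)[OF x b] by simp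
  finally show ?thesis by (simp add: algebra_simps)
qed

lemma II_m: assumes a: "L2 a" and b: "L2 b" shows "II a b \<in> borel_measurable M"
proof -
  have am: "a \<in> borel_measurable M" and bm: "b \<in> borel_measurable M" using a b by (auto simp: L2_def)
  have "(\<lambda>z. (\<lambda>(x, s'). q (fst x) (snd x) s') z * ((a (fst z) - \<gamma> * H a (snd z)) * (b (fst z) - \<gamma> * H b (snd z))))
     \<in> borel_measurable (M \<Otimes>\<^sub>M Sm)"
    using qm measurable_compose[OF measurable_snd Hm[OF am]] measurable_compose[OF measurable_snd Hm[OF bm]]
      measurable_compose[OF measurable_fst am] measurable_compose[OF measurable_fst bm]
    by (intro borel_measurable_times borel_measurable_diff) auto
  moreover have "(\<lambda>z. (\<lambda>(x, s'). q (fst x) (snd x) s') z * ((a (fst z) - \<gamma> * H a (snd z)) * (b (fst z) - \<gamma> * H b (snd z))))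
     = case_prod (\<lambda>x s'. Q x s' * (kk a x s' * kk b x s'))"
    by (auto simp: kk_def)
  ultimately have "case_prod (\<lambda>x s'. Q x s' * (kk a x s' * kk b x s')) \<in> borel_measurable (M \<Otimes>\<^sub>M Sm)" by simp
  then show ?thesis unfolding II_def[abs_def]
    by (rule sigma_finite_measure.borel_measurable_lebesgue_integral[OF sfS])
qed

lemma dII_int: assumes a: "L2 a" and b: "L2 b" shows "integrable M (\<lambda>x. d x * II a b x)"
proof -
  interpret finite_measure M using finM by (intro finite_measureI) simp
  have "integrable M (\<lambda>x. p1max * (2 * (a x)^2 + 2 * (b x)^2 + 2 * p2max * (nrm a + nrm b)))"
    using a b by (simp add: L2_def)
  then show ?thesis
  proof (rule Bochner_Integration.integrable_bound)
    show "(\<lambda>x. d x * II a b x) \<in> borel_measurable M" using dm II_m[OF a b] by simp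
    show "AE x in M. norm (d x * II a b x) \<le> norm (p1max * (2 * (a x)^2 + 2 * (b x)^2 + 2 * p2max * (nrm a + nrm b)))"
    proof (rule AE_mp[OF dAE], rule AE_I2, intro impI)
      fix x assume x: "x \<in> space M" and dx: "pmin \<le> d x \<and> d x \<le> p1max"
      have "\<bar>d x * II a b x\<bar> = d x * \<bar>II a b x\<bar>" using d0 x by (simp add: abs_mult)
      also have "\<dots> \<le> p1max * (2 * (a x)^2 + 2 * (b x)^2 + 2 * p2max * (nrm a + nrm b))"
        using dx d0 x II_bound[OF x a b] by (intro mult_mono) auto
      finally show "norm (d x * II a b x) \<le> norm (p1max * (2 * (a x)^2 + 2 * (b x)^2 + 2 * p2max * (nrm a + nrm b)))"
        by simp
    qed
  qed
qed

end

lemma sum_sq_real: "(\<Sum>i\<in>I. (a i::real))^2 = (\<Sum>i\<in>I. \<Sum>j\<in>I. a i * a j)"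
  by (simp add: power2_eq_square sum_product)

locale setting3 = setting2 +
  fixes J :: nat and psi and v :: "nat \<Rightarrow> real"
  assumes psiL2: "\<forall>j<J. L2 (psi j)"
begin

definition "ff y = (\<Sum>j<J. v j * psi j y)"
definition "FF x s' = (\<Sum>i<J. v i * kk (psi i) x s')"
definition "IIs x = (\<Sum>i<J. \<Sum>j<J. v i * v j * II (psi i) (psi j) x)"

lemma ffL2: "L2 ff"
  unfolding ff_def[abs_def] using psiL2 by (intro L2_sum) auto

lemma FF_sq:
  assumes x: "x \<in> space M"
  shows "integrable Sm (\<lambda>s'. Q x s' * (FF x s')^2)" and "(\<integral>s'. Q x s' * (FF x s')^2 \<partial>Sm) = IIs x"
proof -
  have eq: "(\<lambda>s'. Q x s' * (FF x s')^2) = (\<lambda>s'. \<Sum>i<J. \<Sum>j<J. v i * v j * (Q x s' * (kk (psi i) x s' * kk (psi j) x s')))"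
    unfolding FF_def sum_sq_real by (auto simp: sum_distrib_left algebra_simps intro!: sum.cong)
  have ints: "\<And>i j. i < J \<Longrightarrow> j < J \<Longrightarrow> integrable Sm (\<lambda>s'. Q x s' * (kk (psi i) x s' * kk (psi j) x s'))"
    using psiL2 by (intro kk_prod_int[OF x]) auto
  show "integrable Sm (\<lambda>s'. Q x s' * (FF x s')^2)"
    unfolding eq by (intro Bochner_Integration.integrable_sum Bochner_Integration.integrable_mult_right) (auto intro: ints)
  have "(\<integral>s'. Q x s' * (FF x s')^2 \<partial>Sm) = (\<Sum>i<J. \<integral>s'. (\<Sum>j<J. v i * v j * (Q x s' * (kk (psi i) x s' * kk (psi j) x s'))) \<partial>Sm)"
    unfolding eq
    by (intro Bochner_Integration.integral_sum Bochner_Integration.integrable_sum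
        Bochner_Integration.integrable_mult_right) (auto intro: ints)
  also have "\<dots> = (\<Sum>i<J. \<Sum>j<J. \<integral>s'. v i * v j * (Q x s' * (kk (psi i) x s' * kk (psi j) x s')) \<partial>Sm)"
    by (intro sum.cong refl Bochner_Integration.integral_sum
        Bochner_Integration.integrable_mult_right) (auto intro: ints)
  also have "\<dots> = (\<Sum>i<J. \<Sum>j<J. v i * v j * (\<integral>s'. Q x s' * (kk (psi i) x s' * kk (psi j) x s') \<partial>Sm))"
    by (intro sum.cong refl Bochner_Integration.integral_mult_right) (auto intro: ints)
  finally have "(\<integral>s'. Q x s' * (FF x s')^2 \<partial>Sm) = (\<Sum>i<J. \<Sum>j<J. v i * v j * (\<integral>s'. Q x s' * (kk (psi i) x s' * kk (psi j) x s') \<partial>Sm))" .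
  then show "(\<integral>s'. Q x s' * (FF x s')^2 \<partial>Sm) = IIs x" unfolding IIs_def II_def .
qed

lemma FF_lin:
  assumes x: "x \<in> space M"
  shows "integrable Sm (\<lambda>s'. Q x s' * FF x s')" and "(\<integral>s'. Q x s' * FF x s' \<partial>Sm) = ff x - \<gamma> * P ff x"
proof -
  have eq: "(\<lambda>s'. Q x s' * FF x s') = (\<lambda>s'. \<Sum>i<J. v i * (psi i x * Q x s' - \<gamma> * (Q x s' * H (psi i) s')))"
    unfolding FF_def kk_def by (auto simp: sum_distrib_left algebra_simps intro!: sum.cong)
  have ints: "\<And>i. i < J \<Longrightarrow> integrable Sm (\<lambda>s'. psi i x * Q x s' - \<gamma> * (Q x s' * H (psi i) s'))"
    using psiL2 Qw[OF x] P_facts(1)[OF x] by auto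
  show "integrable Sm (\<lambda>s'. Q x s' * FF x s')"
    unfolding eq by (intro Bochner_Integration.integrable_sum Bochner_Integration.integrable_mult_right) (auto intro: ints)
  have "(\<integral>s'. Q x s' * FF x s' \<partial>Sm) = (\<Sum>i<J. v i * (psi i x - \<gamma> * P (psi i) x))"
  proof -
    have "(\<integral>s'. (\<Sum>i<J. v i * (psi i x * Q x s' - \<gamma> * (Q x s' * H (psi i) s'))) \<partial>Sm)
       = (\<Sum>i<J. \<integral>s'. v i * (psi i x * Q x s' - \<gamma> * (Q x s' * H (psi i) s')) \<partial>Sm)"
      by (intro Bochner_Integration.integral_sum Bochner_Integration.integrable_mult_right) (auto intro: ints)
    also have "\<dots> = (\<Sum>i<J. v i * (psi i x - \<gamma> * P (psi i) x))"
    proof (intro sum.cong refl)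
      fix i assume "i \<in> {..<J}"
      then have i: "L2 (psi i)" using psiL2 by auto
      have "(\<integral>s'. v i * (psi i x * Q x s' - \<gamma> * (Q x s' * H (psi i) s')) \<partial>Sm)
          = v i * ((\<integral>s'. psi i x * Q x s' \<partial>Sm) - (\<integral>s'. \<gamma> * (Q x s' * H (psi i) s') \<partial>Sm))"
        using Qw[OF x] P_facts(1)[OF x i] by simp
      also have "\<dots> = v i * (psi i x - \<gamma> * P (psi i) x)"
        using Qw[OF x] P_facts(1)[OF x i] by (simp add: Pop_def)
      finally show "(\<integral>s'. v i * (psi i x * Q x s' - \<gamma> * (Q x s' * H (psi i) s')) \<partial>Sm) = v i * (psi i x - \<gamma> * P (psi i) x)" .
    qed
    finally show ?thesis unfolding eq .
  qed
  also have "\<dots> = ff x - \<gamma> * (\<Sum>i<J. v i * P (psi i) x)"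
    unfolding ff_def by (simp add: sum_subtractf sum_distrib_left algebra_simps)
  also have "(\<Sum>i<J. v i * P (psi i) x) = P ff x"
    unfolding ff_def[abs_def] using psiL2 by (intro P_sum[OF x, symmetric]) auto
  finally show "(\<integral>s'. Q x s' * FF x s' \<partial>Sm) = ff x - \<gamma> * P ff x" .
qed

lemma jensen_x:
  assumes x: "x \<in> space M"
  shows "(ff x - \<gamma> * P ff x)^2 \<le> IIs x"
proof -
  have FFm: "FF x \<in> borel_measurable Sm"
    unfolding FF_def[abs_def] using kk_m[OF x] psiL2 by (intro borel_measurable_sum borel_measurable_times) auto
  have "ennreal ((\<integral>s'. Q x s' * FF x s' \<partial>Sm)^2) \<le> (\<integral>\<^sup>+s'. ennreal (Q x s' * (FF x s')^2) \<partial>Sm)"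
    using Qw[OF x] FFm by (intro wjensen) auto
  also have "\<dots> = ennreal (\<integral>s'. Q x s' * (FF x s')^2 \<partial>Sm)"
    using FF_sq(1)[OF x] Qw(1)[OF x] by (intro nn_integral_eq_integral) (auto intro!: AE_I2)
  finally have "(\<integral>s'. Q x s' * FF x s' \<partial>Sm)^2 \<le> (\<integral>s'. Q x s' * (FF x s')^2 \<partial>Sm)"
    using Qw(1)[OF x] by (subst (asm) ennreal_le_iff) (auto intro!: integral_nonneg_AE AE_I2)
  then show ?thesis using FF_lin(2)[OF x] FF_sq(2)[OF x] by simp
qed


lemma kappa_kk: "kappa Am pol \<gamma> psi i x s' = kk (psi i) x s'"
  by (simp add: kappa_def kk_def psi_pi_def Hop_def)

lemma QA_eq:
  shows "QF J (\<lambda>i j. Exp3 Sm Am q d (\<lambda>x s'. kappa Am pol \<gamma> psi i x s' * kappa Am pol \<gamma> psi j x s')) v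
      = (\<integral>x. d x * IIs x \<partial>M)"
    and "integrable M (\<lambda>x. d x * IIs x)"
proof -
  have E: "Exp3 Sm Am q d (\<lambda>x s'. kappa Am pol \<gamma> psi i x s' * kappa Am pol \<gamma> psi j x s')
      = (\<integral>x. d x * II (psi i) (psi j) x \<partial>M)" for i j
    by (simp add: Exp3_def II_def kappa_kk)
  have ints: "\<And>i j. i < J \<Longrightarrow> j < J \<Longrightarrow> integrable M (\<lambda>x. d x * II (psi i) (psi j) x)"
    using psiL2 by (intro dII_int) auto
  have eq: "(\<lambda>x. d x * IIs x) = (\<lambda>x. \<Sum>i<J. \<Sum>j<J. v i * v j * (d x * II (psi i) (psi j) x))"
    unfolding IIs_def by (auto simp: sum_distrib_left algebra_simps intro!: sum.cong)
  show "integrable M (\<lambda>x. d x * IIs x)"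
    unfolding eq by (intro Bochner_Integration.integrable_sum Bochner_Integration.integrable_mult_right) (auto intro: ints)
  have "(\<integral>x. d x * IIs x \<partial>M) = (\<Sum>i<J. \<integral>x. (\<Sum>j<J. v i * v j * (d x * II (psi i) (psi j) x)) \<partial>M)"
    unfolding eq
    by (intro Bochner_Integration.integral_sum Bochner_Integration.integrable_sum
        Bochner_Integration.integrable_mult_right) (auto intro: ints)
  also have "\<dots> = (\<Sum>i<J. \<Sum>j<J. \<integral>x. v i * v j * (d x * II (psi i) (psi j) x) \<partial>M)"
    by (intro sum.cong refl Bochner_Integration.integral_sum
        Bochner_Integration.integrable_mult_right) (auto intro: ints)
  also have "\<dots> = (\<Sum>i<J. \<Sum>j<J. v i * v j * (\<integral>x. d x * II (psi i) (psi j) x \<partial>M))"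
    by (intro sum.cong refl Bochner_Integration.integral_mult_right) (auto intro: ints)
  finally show "QF J (\<lambda>i j. Exp3 Sm Am q d (\<lambda>x s'. kappa Am pol \<gamma> psi i x s' * kappa Am pol \<gamma> psi j x s')) v
      = (\<integral>x. d x * IIs x \<partial>M)"
    unfolding QF_def E by simp
qed

lemma QB_eq:
  shows "QF J (\<lambda>i j. \<integral>x. d x * psi i x * psi j x \<partial>M) v = (\<integral>x. d x * (ff x)^2 \<partial>M)"
proof -
  have ints: "\<And>i j. i < J \<Longrightarrow> j < J \<Longrightarrow> integrable M (\<lambda>x. d x * psi i x * psi j x)"
    using psiL2 by (intro dprod_int) auto
  have eq: "(\<lambda>x. d x * (ff x)^2) = (\<lambda>x. \<Sum>i<J. \<Sum>j<J. v i * v j * (d x * psi i x * psi j x))"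
    unfolding ff_def sum_sq_real by (auto simp: sum_distrib_left algebra_simps intro!: sum.cong)
  have "(\<integral>x. d x * (ff x)^2 \<partial>M) = (\<Sum>i<J. \<integral>x. (\<Sum>j<J. v i * v j * (d x * psi i x * psi j x)) \<partial>M)"
    unfolding eq
    by (intro Bochner_Integration.integral_sum Bochner_Integration.integrable_sum
        Bochner_Integration.integrable_mult_right) (auto intro: ints)
  also have "\<dots> = (\<Sum>i<J. \<Sum>j<J. \<integral>x. v i * v j * (d x * psi i x * psi j x) \<partial>M)"
    by (intro sum.cong refl Bochner_Integration.integral_sum
        Bochner_Integration.integrable_mult_right) (auto intro: ints)
  also have "\<dots> = (\<Sum>i<J. \<Sum>j<J. v i * v j * (\<integral>x. d x * psi i x * psi j x \<partial>M))"
    by (intro sum.cong refl Bochner_Integration.integral_mult_right) (auto intro: ints)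
  finally show ?thesis unfolding QF_def by simp
qed


lemma dsq_int: assumes "L2 a" shows "integrable M (\<lambda>x. d x * (a x)^2)"
  using dprod_int[OF assms assms] by (simp add: power2_eq_square mult.assoc)

lemma dsq_nonneg: "0 \<le> (\<integral>x. d x * (a x)^2 \<partial>M)"
  using d0 by (intro integral_nonneg_AE AE_I2) auto

lemma abs_le_sqrt_real: assumes "(y::real)^2 \<le> z" shows "\<bar>y\<bar> \<le> sqrt z"
proof -
  have "sqrt (y^2) \<le> sqrt z" using assms by (rule real_sqrt_le_mono)
  then show ?thesis by simp
qed

lemma main_ineq:
  shows "(pmin * (1-\<gamma>)^2 / (2*(pmin+p2max))) * (\<integral>x. d x * (ff x)^2 \<partial>M) \<le> (\<integral>x. d x * IIs x \<partial>M)"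
proof -
  have spne: "space M \<noteq> {}"
  proof
    assume "space M = {}"
    then have "(\<integral>x. d x \<partial>M) = 0" by (intro integral_eq_zero_AE AE_I2) auto
    with d1 show False by simp
  qed
  define Pf where "Pf = P ff"
  have fm: "ff \<in> borel_measurable M" using ffL2 by (simp add: L2_def)
  have Pfm: "Pf \<in> borel_measurable M" unfolding Pf_def by (rule Pm[OF fm])
  have Pfb: "\<forall>x\<in>space M. \<bar>Pf x\<bar> \<le> sqrt (p2max * nrm ff)"
    unfolding Pf_def using P_facts(4)[OF _ ffL2] by (auto intro: abs_le_sqrt_real)
  have PfL2: "L2 Pf" by (rule L2_bdd[OF finM Pfm Pfb])
  define g where "g = (\<lambda>y. ff y + (- \<gamma>) * Pf y)"
  have gL2: "L2 g" unfolding g_def by (intro L2_lin ffL2 PfL2)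
  define U where "U = (SUP x\<in>space M. \<bar>Pf x\<bar>)"
  have bdd: "bdd_above ((\<lambda>x. \<bar>Pf x\<bar>) ` space M)" using Pfb by (intro bdd_aboveI2) auto
  have Uup: "\<forall>y\<in>space M. \<bar>Pf y\<bar> \<le> U" unfolding U_def using bdd by (auto intro: cSUP_upper)
  define S where "S = sqrt (p2max * nrm g)"
  have key: "\<bar>Pf x\<bar> \<le> S + \<gamma> * U" if x: "x \<in> space M" for x
  proof -
    have "(\<lambda>y. g y + \<gamma> * Pf y) = ff" unfolding g_def by auto
    then have "Pf x = P (\<lambda>y. g y + \<gamma> * Pf y) x" unfolding Pf_def by simp
    also have "\<dots> = P g x + \<gamma> * P Pf x" by (rule P_lin[OF x gL2 PfL2])
    finally have eq: "Pf x = P g x + \<gamma> * P Pf x" .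
    have a1: "\<bar>P g x\<bar> \<le> S" unfolding S_def using P_facts(4)[OF x gL2] by (rule abs_le_sqrt_real)
    have a2: "\<bar>P Pf x\<bar> \<le> U" by (rule P_sup[OF x Pfm Uup])
    have "\<bar>Pf x\<bar> \<le> \<bar>P g x\<bar> + \<bar>\<gamma> * P Pf x\<bar>" unfolding eq by (rule abs_triangle_ineq)
    also have "\<bar>\<gamma> * P Pf x\<bar> = \<gamma> * \<bar>P Pf x\<bar>" using g0 by (simp add: abs_mult)
    also have "\<gamma> * \<bar>P Pf x\<bar> \<le> \<gamma> * U" using a2 g0 by (intro mult_left_mono) auto
    finally show ?thesis using a1 by linarith
  qed
  have UU: "U \<le> S + \<gamma> * U" unfolding U_def[of] using spne key
    by (subst (1) U_def[symmetric]) (intro cSUP_least, auto)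
  obtain x0 where x0: "x0 \<in> space M" using spne by blast
  have U0: "0 \<le> U" using Uup x0 by (meson abs_ge_zero order_trans)
  have S0: "0 \<le> S" unfolding S_def using p2pos nrm_nonneg[of g] by simp
  have S2: "S^2 = p2max * nrm g" unfolding S_def using p2pos nrm_nonneg[of g] by simp
  define e where "e = (1 - \<gamma>)^2"
  have e0: "0 < e" and e1: "e \<le> 1" unfolding e_def using g0 g1 by (auto simp: power_le_one)
  have hU: "e * U^2 \<le> p2max * nrm g"
  proof -
    have "(1 - \<gamma>) * U \<le> S" using UU by (simp add: algebra_simps)
    moreover have "0 \<le> (1 - \<gamma>) * U" using g1 U0 by simp
    ultimately have "((1 - \<gamma>) * U)^2 \<le> S^2" by (intro power_mono) auto
    then show ?thesis unfolding S2 e_def by (simp add: power_mult_distrib)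
  qed
  define D where "D = (\<integral>x. d x * (g x)^2 \<partial>M)"
  define QB where "QB = (\<integral>x. d x * (ff x)^2 \<partial>M)"
  have D0: "0 \<le> D" unfolding D_def by (rule dsq_nonneg)
  have hF: "QB \<le> 2 * D + 2 * U^2"
  proof -
    have "QB \<le> (\<integral>x. 2 * (d x * (g x)^2) + (2 * U^2) * d x \<partial>M)"
      unfolding QB_def
    proof (rule integral_mono)
      show "integrable M (\<lambda>x. d x * (ff x)^2)" by (rule dsq_int[OF ffL2])
      show "integrable M (\<lambda>x. 2 * (d x * (g x)^2) + (2 * U^2) * d x)"
        using dsq_int[OF gL2] dint by simp
      fix x assume x: "x \<in> space M"
      have "ff x = g x + \<gamma> * Pf x" unfolding g_def by simp
      then have "(ff x)^2 \<le> 2 * (g x)^2 + 2 * (\<gamma> * Pf x)^2" using sq_sum_le by metis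
      moreover have "(\<gamma> * Pf x)^2 \<le> U^2"
      proof -
        have px: "\<bar>Pf x\<bar> \<le> U" using Uup x by auto
        have "\<gamma> * \<bar>Pf x\<bar> \<le> 1 * U" using g0 g1 px U0 by (intro mult_mono) auto
        then have "\<bar>\<gamma> * Pf x\<bar> \<le> 1 * U" using g0 by (simp add: abs_mult)
        then have "\<bar>\<gamma> * Pf x\<bar>^2 \<le> U^2" by (intro power_mono) auto
        then show ?thesis by simp
      qed
      ultimately have "(ff x)^2 \<le> 2 * (g x)^2 + 2 * U^2" by linarith
      then have "d x * (ff x)^2 \<le> d x * (2 * (g x)^2 + 2 * U^2)" using d0 x by (intro mult_left_mono) auto
      then show "d x * (ff x)^2 \<le> 2 * (d x * (g x)^2) + (2 * U^2) * d x" by (simp add: algebra_simps)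
    qed
    also have "\<dots> = 2 * D + 2 * U^2"
      unfolding D_def using dsq_int[OF gL2] dint d1 by simp
    finally show ?thesis .
  qed
  have hD: "pmin * nrm g \<le> D"
  proof -
    have "(\<integral>x. pmin * (g x)^2 \<partial>M) \<le> D"
      unfolding D_def
    proof (rule integral_mono_AE)
      show "integrable M (\<lambda>x. pmin * (g x)^2)" using gL2 by (simp add: L2_def)
      show "integrable M (\<lambda>x. d x * (g x)^2)" by (rule dsq_int[OF gL2])
      show "AE x in M. pmin * (g x)^2 \<le> d x * (g x)^2"
        using dAE by eventually_elim (auto intro: mult_right_mono)
    qed
    then show ?thesis unfolding nrm_def using gL2 by (simp add: L2_def)
  qed
  have hA: "D \<le> (\<integral>x. d x * IIs x \<partial>M)"
    unfolding D_def
  proof (rule integral_mono)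
    show "integrable M (\<lambda>x. d x * (g x)^2)" by (rule dsq_int[OF gL2])
    show "integrable M (\<lambda>x. d x * IIs x)" by (rule QA_eq(2))
    fix x assume x: "x \<in> space M"
    have "(g x)^2 \<le> IIs x" unfolding g_def Pf_def using jensen_x[OF x] by simp
    then show "d x * (g x)^2 \<le> d x * IIs x" using d0 x by (intro mult_left_mono) auto
  qed
  have pe0: "0 \<le> pmin * e" using pminpos e0 by simp
  have s1: "pmin * e * QB \<le> pmin * e * (2 * D + 2 * U^2)" using hF pe0 by (rule mult_left_mono)
  have s2: "pmin * e * D \<le> pmin * 1 * D" using e1 pminpos D0 by (intro mult_right_mono mult_left_mono) auto
  have s3: "pmin * (e * U^2) \<le> pmin * (p2max * nrm g)" using hU pminpos by (intro mult_left_mono) auto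
  have s4: "p2max * (pmin * nrm g) \<le> p2max * D" using hD p2pos by (intro mult_left_mono) auto
  have "pmin * e * QB \<le> 2 * (pmin + p2max) * D"
  proof -
    have "pmin * e * (2 * D + 2 * U^2) = 2 * (pmin * e * D) + 2 * (pmin * (e * U^2))" by (simp add: algebra_simps)
    moreover have "pmin * (p2max * nrm g) = p2max * (pmin * nrm g)" by (simp add: algebra_simps)
    moreover have "2 * (pmin + p2max) * D = 2 * (pmin * 1 * D) + 2 * (p2max * D)" by (simp add: algebra_simps)
    ultimately show ?thesis using s1 s2 s3 s4 by linarith
  qed
  then have "pmin * e * QB / (2 * (pmin + p2max)) \<le> D"
    using pminpos p2pos by (simp add: divide_le_eq mult.commute)
  then show ?thesis using hA unfolding QB_def e_def by (simp add: mult.commute mult.left_commute)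
qed

end

context setting2
begin

lemma final_J:
  assumes J: "J \<ge> 1" and psiL2: "\<forall>j<J. L2 (psi j)"
  shows "lambda_min (mat J J (\<lambda>(i, j). Exp3 Sm Am q d (\<lambda>x s'. kappa Am pol \<gamma> psi i x s' * kappa Am pol \<gamma> psi j x s')))
      \<ge> (pmin * (1-\<gamma>)^2 / (2*(pmin+p2max))) * lambda_min (mat J J (\<lambda>(i, j). \<integral>x. d x * psi i x * psi j x \<partial>M))"
    and "lambda_min (mat J J (\<lambda>(i, j). \<integral>x. d x * psi i x * psi j x \<partial>M)) \<ge> 0"
proof -
  have S3: "setting3 Sm Am q pol d p2max \<gamma> pmin p1max J psi" for v :: "nat \<Rightarrow> real"
    using psiL2 by unfold_locales
  define EA where "EA = (\<lambda>i j. Exp3 Sm Am q d (\<lambda>x s'. kappa Am pol \<gamma> psi i x s' * kappa Am pol \<gamma> psi j x s'))"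
  define EB where "EB = (\<lambda>i j. \<integral>x. d x * psi i x * psi j x \<partial>M)"
  have symA: "\<forall>i<J. \<forall>j<J. EA i j = EA j i" unfolding EA_def by (simp add: mult.commute)
  have symB: "\<forall>i<J. \<forall>j<J. EB i j = EB j i" unfolding EB_def by (simp add: ac_simps)
  define lA where "lA = lambda_min (mat J J (\<lambda>(i, j). EA i j))"
  define lB where "lB = lambda_min (mat J J (\<lambda>(i, j). EB i j))"
  have QBnn: "0 \<le> QF J EB w" for w
    unfolding EB_def setting3.QB_eq[OF S3] by (rule setting3.dsq_nonneg[OF S3])
  obtain vB where vB: "NS J vB > 0" "lB * NS J vB = QF J EB vB"
    using lambda_min_char(1)[OF J symB] unfolding lB_def by blast
  have lB0: "lB \<ge> 0"
  proof -
    have "0 \<le> lB * NS J vB" using vB(2) QBnn by simp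
    then show ?thesis using vB(1) by (simp add: zero_le_mult_iff)
  qed
  obtain vA where vA: "NS J vA > 0" "lA * NS J vA = QF J EA vA"
    using lambda_min_char(1)[OF J symA] unfolding lA_def by blast
  have lBA: "lB * NS J vA \<le> QF J EB vA" using lambda_min_char(2)[OF J symB] unfolding lB_def by blast
  define k0 where "k0 = pmin * (1-\<gamma>)^2 / (2*(pmin+p2max))"
  have k0: "0 \<le> k0" unfolding k0_def using pminpos p2pos by simp
  have main: "k0 * QF J EB vA \<le> QF J EA vA"
    unfolding k0_def EA_def EB_def setting3.QB_eq[OF S3] setting3.QA_eq(1)[OF S3]
    by (rule setting3.main_ineq[OF S3])
  have "k0 * lB * NS J vA \<le> lA * NS J vA"
  proof -
    have "k0 * (lB * NS J vA) \<le> k0 * QF J EB vA" using lBA k0 by (rule mult_left_mono)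
    then show ?thesis using main vA(2) by (simp add: mult.assoc)
  qed
  then have "k0 * lB \<le> lA" using vA(1) by simp
  then show "lambda_min (mat J J (\<lambda>(i, j). Exp3 Sm Am q d (\<lambda>x s'. kappa Am pol \<gamma> psi i x s' * kappa Am pol \<gamma> psi j x s')))
      \<ge> (pmin * (1-\<gamma>)^2 / (2*(pmin+p2max))) * lambda_min (mat J J (\<lambda>(i, j). \<integral>x. d x * psi i x * psi j x \<partial>M))"
    unfolding lA_def lB_def k0_def EA_def EB_def by simp
  show "lambda_min (mat J J (\<lambda>(i, j). \<integral>x. d x * psi i x * psi j x \<partial>M)) \<ge> 0"
    using lB0 unfolding lB_def EB_def by simp
qed

end

lemma final_arith:
  fixes m pmin p1max p2max e lA lB :: real
  assumes m0: "m > 0" and p0: "pmin > 0" and p2: "p2max > 0" and p1: "pmin \<le> p1max"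
    and pm: "pmin * m \<le> 1" and e0: "e \<ge> 0" and lB: "lB \<ge> 0"
    and lA: "lA \<ge> (pmin * e / (2*(pmin+p2max))) * lB"
  shows "lA \<ge> m / 4 * (pmin^2 / max p1max p2max) * e * lB"
proof -
  define P where "P = max p1max p2max"
  have P0: "P > 0" unfolding P_def using p2 by simp
  have PP: "pmin + p2max \<le> 2 * P" unfolding P_def using p1 by linarith
  have "m / 4 * (pmin^2 / P) = (pmin * m) * pmin / (4 * P)" by (simp add: power2_eq_square)
  also have "\<dots> \<le> 1 * pmin / (4 * P)"
    using pm p0 P0 by (intro divide_right_mono mult_right_mono) auto
  also have "\<dots> = pmin / (4 * P)" by simp
  also have "\<dots> \<le> pmin / (2 * (pmin + p2max))"
    by (rule divide_left_mono) (use p0 p2 P0 PP in auto)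
  finally have k: "m / 4 * (pmin^2 / P) \<le> pmin / (2 * (pmin + p2max))" .
  have "m / 4 * (pmin^2 / P) * e * lB \<le> pmin / (2 * (pmin + p2max)) * e * lB"
    using k e0 lB by (intro mult_right_mono) auto
  also have "\<dots> = (pmin * e / (2*(pmin+p2max))) * lB" by simp
  finally show ?thesis using lA unfolding P_def by linarith
qed

theorem lemma4:
  fixes Sm :: "'s measure" and Am :: "'a measure"
  assumes "sigma_finite_measure Sm" and "sigma_finite_measure Am"
  shows "\<exists>c>0. \<forall>(q :: 's \<Rightarrow> 'a \<Rightarrow> 's \<Rightarrow> real) (pol :: 's \<Rightarrow> 'a \<Rightarrow> real)
      (pb :: 's \<Rightarrow> 'a \<Rightarrow> real) (nu0 :: 's \<Rightarrow> real) (d :: 's \<times> 'a \<Rightarrow> real)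
      (\<gamma> :: real) (T :: nat) (N :: nat) (pmin :: real) (p1max :: real) (p2max :: real).
    ( \<comment> \<open>discount factor, sample sizes\<close>
      0 \<le> \<gamma> \<and> \<gamma> < 1 \<and> N \<ge> 1 \<and> T \<ge> 1
      \<comment> \<open>transition density q(s'|s,a) = q s a s'\<close>
    \<and> (\<lambda>(x, s'). q (fst x) (snd x) s') \<in> borel_measurable (SAM Sm Am \<Otimes>\<^sub>M Sm)
    \<and> (\<forall>x\<in>space (SAM Sm Am). (\<forall>s'\<in>space Sm. q (fst x) (snd x) s' \<ge> 0)
          \<and> integrable Sm (q (fst x) (snd x)) \<and> (\<integral>s'. q (fst x) (snd x) s' \<partial>Sm) = 1)
      \<comment> \<open>target policy pi(a|s) = pol s a and behaviour policy pb(a|s) = pb s a\<close>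
    \<and> (\<lambda>x. pol (fst x) (snd x)) \<in> borel_measurable (SAM Sm Am)
    \<and> (\<lambda>x. pb (fst x) (snd x)) \<in> borel_measurable (SAM Sm Am)
    \<and> (\<forall>s\<in>space Sm. (\<forall>a\<in>space Am. pol s a \<ge> 0 \<and> pb s a \<ge> 0)
          \<and> integrable Am (pol s) \<and> (\<integral>a. pol s a \<partial>Am) = 1
          \<and> integrable Am (pb s) \<and> (\<integral>a. pb s a \<partial>Am) = 1)
      \<comment> \<open>initial state density\<close>
    \<and> nu0 \<in> borel_measurable Sm \<and> (\<forall>s\<in>space Sm. nu0 s \<ge> 0)
    \<and> integrable Sm nu0 \<and> (\<integral>s. nu0 s \<partial>Sm) = 1
      \<comment> \<open>strict stationarity of (S_t,A_t) under pb with stationary density d\<close>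
    \<and> d \<in> borel_measurable (SAM Sm Am) \<and> (\<forall>x\<in>space (SAM Sm Am). d x \<ge> 0)
    \<and> integrable (SAM Sm Am) d \<and> (\<integral>x. d x \<partial>SAM Sm Am) = 1
    \<and> (\<forall>t. AE x in SAM Sm Am. marg Sm Am nu0 q pb t x = d x)
      \<comment> \<open>exponential beta-mixing\<close>
    \<and> exp_beta_mixing Sm Am q pb d
      \<comment> \<open>density bounds\<close>
    \<and> 0 < pmin \<and> 0 < p1max \<and> 0 < p2max
    \<and> (\<forall>x\<in>space (SAM Sm Am). pmin \<le> dbar Sm Am nu0 q pb T x \<and> dbar Sm Am nu0 q pb T x \<le> p1max)
    \<and> (\<forall>s\<in>space Sm. AE a in Am. pb s a = 0 \<longrightarrow> pol s a = 0)
    \<and> (\<forall>x\<in>space (SAM Sm Am). \<forall>s'\<in>space Sm. \<forall>a'\<in>space Am.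
          q (fst x) (snd x) s' * pol s' a' \<le> p2max))
    \<longrightarrow> (\<forall>J\<ge>1. \<forall>psi :: nat \<Rightarrow> 's \<times> 'a \<Rightarrow> real.
          (\<forall>j<J. psi j \<in> borel_measurable (SAM Sm Am)
                 \<and> integrable (SAM Sm Am) (\<lambda>x. (psi j x)\<^sup>2))
          \<longrightarrow> e_J Sm Am q d pol \<gamma> J psi
              \<ge> c * (pmin\<^sup>2 / max p1max p2max) * (1 - \<gamma>)\<^sup>2 * omega_J Sm Am d J psi)"
proof -
  define mu where "mu = emeasure (SAM Sm Am) (space (SAM Sm Am))"
  define c where "c = (if 0 < mu \<and> mu < \<infinity> then enn2real mu / 4 else 1)"
  have cpos: "c > 0" unfolding c_def by (auto simp: enn2real_positive_iff)
  show ?thesis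
    apply (rule exI[of _ c], intro conjI cpos allI impI, elim conjE)
    subgoal premises prems for q pol pb nu0 d \<gamma> T N pmin p1max p2max J psi
    proof -
      have P0: "\<forall>t. AE x in SAM Sm Am. marg Sm Am nu0 q pb t x = d x" by (rule prems(20))
      have P1: "T \<ge> 1" by (rule prems(6))
      have P2: "\<forall>x\<in>space (SAM Sm Am). pmin \<le> dbar Sm Am nu0 q pb T x \<and> dbar Sm Am nu0 q pb T x \<le> p1max" by (rule prems(25))
      have P3: "\<forall>x\<in>space (SAM Sm Am). d x \<ge> 0" by (rule prems(17))
      have P4: "integrable (SAM Sm Am) d" by (rule prems(18))
      have P5: "(\<integral>x. d x \<partial>SAM Sm Am) = 1" by (rule prems(19))
      have P6: "0 < pmin" by (rule prems(22))
      have P7: "0 < p2max" by (rule prems(24))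
      have P8: "J \<ge> 1" by (rule prems(1))
      have P9: "\<forall>j<J. psi j \<in> borel_measurable (SAM Sm Am) \<and> integrable (SAM Sm Am) (\<lambda>x. (psi j x)\<^sup>2)" by (rule prems(2))
      have Pq1: "(\<lambda>(x, s'). q (fst x) (snd x) s') \<in> borel_measurable (SAM Sm Am \<Otimes>\<^sub>M Sm)" by (rule prems(7))
      have Pq2: "\<forall>x\<in>space (SAM Sm Am). (\<forall>s'\<in>space Sm. q (fst x) (snd x) s' \<ge> 0)
          \<and> integrable Sm (q (fst x) (snd x)) \<and> (\<integral>s'. q (fst x) (snd x) s' \<partial>Sm) = 1" by (rule prems(8))
      have Ppol: "(\<lambda>x. pol (fst x) (snd x)) \<in> borel_measurable (SAM Sm Am)" by (rule prems(9))
      have Ppp: "\<forall>s\<in>space Sm. (\<forall>a\<in>space Am. pol s a \<ge> 0 \<and> pb s a \<ge> 0)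
          \<and> integrable Am (pol s) \<and> (\<integral>a. pol s a \<partial>Am) = 1
          \<and> integrable Am (pb s) \<and> (\<integral>a. pb s a \<partial>Am) = 1" by (rule prems(11))
      have polprop: "\<forall>s\<in>space Sm. (\<forall>a\<in>space Am. pol s a \<ge> 0)
          \<and> integrable Am (pol s) \<and> (\<integral>a. pol s a \<partial>Am) = 1" using Ppp by blast
      have Pqp: "\<forall>x\<in>space (SAM Sm Am). \<forall>s'\<in>space Sm. \<forall>a'\<in>space Am.
          q (fst x) (snd x) s' * pol s' a' \<le> p2max" by (rule prems(27))
      have Pdm: "d \<in> borel_measurable (SAM Sm Am)" by (rule prems(16))
      have Pg0: "0 \<le> \<gamma>" by (rule prems(3))
      have Pg1: "\<gamma> < 1" by (rule prems(4))
      have ae_all: "AE x in SAM Sm Am. \<forall>t. marg Sm Am nu0 q pb t x = d x"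
        using P0 by (simp add: AE_all_countable)
      have dAE: "AE x in SAM Sm Am. pmin \<le> d x \<and> d x \<le> p1max"
      proof (rule AE_mp[OF ae_all], rule AE_I2, intro impI)
        fix x assume x: "x \<in> space (SAM Sm Am)" and e: "\<forall>t. marg Sm Am nu0 q pb t x = d x"
        have "dbar Sm Am nu0 q pb T x = d x" unfolding dbar_def using e P1 by simp
        then show "pmin \<le> d x \<and> d x \<le> p1max" using P2 x by metis
      qed
      have nnd: "(\<integral>\<^sup>+x. ennreal (d x) \<partial>SAM Sm Am) = 1"
        using P3 P4 P5 by (subst nn_integral_eq_integral) (auto intro!: AE_I2)
      have pmu: "ennreal pmin * mu \<le> 1"
      proof -
        have "ennreal pmin * mu = (\<integral>\<^sup>+x. ennreal pmin \<partial>SAM Sm Am)" unfolding mu_def by simp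
        also have "\<dots> \<le> (\<integral>\<^sup>+x. ennreal (d x) \<partial>SAM Sm Am)"
        proof (rule nn_integral_mono_AE)
          show "AE x in SAM Sm Am. ennreal pmin \<le> ennreal (d x)"
            using dAE by eventually_elim (auto intro: ennreal_leI)
        qed
        finally show ?thesis unfolding nnd .
      qed
      have mufin: "mu < \<infinity>"
      proof -
        have "mu \<noteq> \<infinity>"
        proof
          assume "mu = \<infinity>"
          then have "ennreal pmin * mu = \<infinity>" using P6 by (simp add: ennreal_mult_top)
          then show False using pmu by (simp add: top_unique)
        qed
        then show ?thesis by (simp add: less_top)
      qed
      have AEF: "(AE x in SAM Sm Am. False) \<longleftrightarrow> mu = 0"
        unfolding mu_def by (simp add: eventually_False ae_filter_eq_bot_iff)
      have mupos: "mu > 0"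
      proof (rule ccontr)
        assume "\<not> mu > 0"
        then have "mu = 0" by (simp add: not_gr_zero)
        then have "AE x in SAM Sm Am. False" using AEF by simp
        then have "AE x in SAM Sm Am. d x = 0" by (auto elim: AE_mp)
        then have "(\<integral>x. d x \<partial>SAM Sm Am) = 0" by (rule integral_eq_zero_AE)
        with P5 show False by simp
      qed
      have cdef: "c = enn2real mu / 4" unfolding c_def using mufin mupos by simp
      have m0: "enn2real mu > 0" using mufin mupos by (simp add: enn2real_positive_iff)
      have pm1: "pmin * enn2real mu \<le> 1"
      proof -
        have "ennreal (pmin * enn2real mu) = ennreal pmin * ennreal (enn2real mu)"
          by (rule ennreal_mult) (use P6 in auto)
        also have "ennreal (enn2real mu) = mu" using mufin by simp
        finally have "ennreal (pmin * enn2real mu) \<le> 1" using pmu by simp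
        then show ?thesis by (simp add: ennreal_le_1)
      qed
      have pmp1: "pmin \<le> p1max"
      proof (rule ccontr)
        assume nle: "\<not> pmin \<le> p1max"
        have "AE x in SAM Sm Am. False" using dAE by eventually_elim (use nle in linarith)
        with AEF mupos show False by simp
      qed
      have finM: "emeasure (SAM Sm Am) (space (SAM Sm Am)) < \<infinity>" using mufin unfolding mu_def .
      have S2: "setting2 Sm Am q pol d p2max \<gamma> pmin p1max"
        unfolding setting2_def setting_def setting2_axioms_def
        by (intro conjI; fact)
      have psiL2: "\<forall>j<J. setting.L2 Sm Am (psi j)"
        using P9 by (simp add: setting.L2_def[OF setting2.axioms(1)[OF S2]])
      have A: "lambda_min (mat J J (\<lambda>(i, j). Exp3 Sm Am q d (\<lambda>x s'. kappa Am pol \<gamma> psi i x s' * kappa Am pol \<gamma> psi j x s')))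
        \<ge> (pmin * (1-\<gamma>)^2 / (2*(pmin+p2max))) * lambda_min (mat J J (\<lambda>(i, j). \<integral>x. d x * psi i x * psi j x \<partial>SAM Sm Am))"
        by (rule setting2.final_J(1)[OF S2 P8 psiL2])
      have B: "lambda_min (mat J J (\<lambda>(i, j). \<integral>x. d x * psi i x * psi j x \<partial>SAM Sm Am)) \<ge> 0"
        by (rule setting2.final_J(2)[OF S2 P8 psiL2])
      show ?thesis
        unfolding e_J_def omega_J_def cdef
        by (rule final_arith[OF m0 P6 P7 pmp1 pm1 _ B A]) simp
    qed
    done
qed

end
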